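(* Let $t,u\in\mathbb{R}$ satisfy $t\notin\{0,1\}$, $u\notin\{0,1,-1\}$, $2u\ne t+1$, $tu+u\ne2$, $D_F(t,u)\ne0$ and $V_F(t,\omega(u))>0$. Then $\mathfrak{g}_{t,u}\in\mathcal{E}(\mathcal{P}_{4,4})$.
   Context: Variables $a,b,c,d$. Put $s_0=a^4+b^4+c^4+d^4-4abcd$; $s_1=T_{3,1}-12abcd$ with $T_{3,1}=\sum_{i\ne j}x_i^3x_j$; $s_2=\sum_{i<j}x_i^2x_j^2-6abcd$; $s_3=T_{2,1,1}-12abcd$ with $T_{2,1,1}=\sum_i x_i^2\sum_{j<k,\ j,k\ne i}x_jx_k$; $s_4=abcd$ (here $(x_1,x_2,x_3,x_4)=(a,b,c,d)$). Let $\omega(u)=u+\frac1u-2$ and $p^G_0(t,w)=(4t+2)w^2-3(t-1)^2w$, $p^G_1(t,w)=-2(t+1)^2w^2+2(t+1)(t-1)^2w$, $p^G_2(t,w)=4t^2w^2-2(t-1)^2(2t-1)w+2(t-1)^4$, $p^G_3(t,w)=2(t+1)^2w^2-(t-1)^2(t^2+3)w-2(t-1)^4$, $p^G_4(t,w)=2(t-1)^4w^2$, and for $u\ne0$, $\mathfrak{g}_{t,u}=u^2\sum_{i=0}^4p^G_i(t,\omega(u))s_i$. Let $V_F(t,w)=(3+6t-t^2)w^2-6(t-1)^2w$ and $D_F(t,u)=(3+6t-t^2)-(13+6t+5t^2)u+(10+9t+4t^2+t^3)u^2-(1+6t+t^2)u^3$. $\mathcal{P}_{4,4}$ is the cone of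 real quartic forms in $a,b,c,d$ nonnegative on $\mathbb{R}^4$; $f\in\mathcal{P}_{4,4}\setminus\{0\}$ is extremal ($f\in\mathcal{E}(\mathcal{P}_{4,4})$) if $f=g+h$ with $g,h\in\mathcal{P}_{4,4}$ forces $g,h\in\mathbb{R}_{\ge0}f$. *)

theory Defs
  imports Complex_Main
begin

type_synonym form4 = "real \<Rightarrow> real \<Rightarrow> real \<Rightarrow> real \<Rightarrow> real"

definition exps4 :: "(nat \<times> nat \<times> nat \<times> nat) set" where
  "exps4 = {(i,j,k,l). i \<le> 4 \<and> j \<le> 4 \<and> k \<le> 4 \<and> l \<le> 4 \<and> i + j + k + l = 4}"

definition quartic_form :: "form4 \<Rightarrow> bool" where
  "quartic_form f \<longleftrightarrow> (\<exists>coef :: nat \<times> nat \<times> nat \<times> nat \<Rightarrow> real.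
     \<forall>a b c d. f a b c d =
       (\<Sum>(i,j,k,l)\<in>exps4. coef (i,j,k,l) * a ^ i * b ^ j * c ^ k * d ^ l))"

definition P44 :: "form4 set" where
  "P44 = {f. quartic_form f \<and> (\<forall>a b c d. f a b c d \<ge> 0)}"

definition extremal_P44 :: "form4 \<Rightarrow> bool" where
  "extremal_P44 f \<longleftrightarrow> f \<in> P44 \<and> f \<noteq> (\<lambda>a b c d. 0) \<and>
     (\<forall>g \<in> P44. \<forall>h \<in> P44. f = (\<lambda>a b c d. g a b c d + h a b c d) \<longrightarrow>
        (\<exists>r\<ge>0. g = (\<lambda>a b c d. r * f a b c d)) \<and>
        (\<exists>r\<ge>0. h = (\<lambda>a b c d. r * f a b c d)))"

definition s0 :: form4 where
  "s0 a b c d = a^4 + b^4 + c^4 + d^4 - 4*a*b*c*d"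

definition T31 :: form4 where
  "T31 a b c d =
     a^3*b + a^3*c + a^3*d + b^3*a + b^3*c + b^3*d +
     c^3*a + c^3*b + c^3*d + d^3*a + d^3*b + d^3*c"

definition s1 :: form4 where
  "s1 a b c d = T31 a b c d - 12*a*b*c*d"

definition s2 :: form4 where
  "s2 a b c d = a^2*b^2 + a^2*c^2 + a^2*d^2 + b^2*c^2 + b^2*d^2 + c^2*d^2 - 6*a*b*c*d"

definition T211 :: form4 where
  "T211 a b c d = a^2*(b*c + b*d + c*d) + b^2*(a*c + a*d + c*d)
                + c^2*(a*b + a*d + b*d) + d^2*(a*b + a*c + b*c)"

definition s3 :: form4 where
  "s3 a b c d = T211 a b c d - 12*a*b*c*d"

definition s4 :: form4 where
  "s4 a b c d = a*b*c*d"

definition omega :: "real \<Rightarrow> real" where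
  "omega u = u + 1/u - 2"

definition pG0 :: "real \<Rightarrow> real \<Rightarrow> real" where
  "pG0 t w = (4*t+2)*w^2 - 3*(t-1)^2*w"
definition pG1 :: "real \<Rightarrow> real \<Rightarrow> real" where
  "pG1 t w = -2*(t+1)^2*w^2 + 2*(t+1)*(t-1)^2*w"
definition pG2 :: "real \<Rightarrow> real \<Rightarrow> real" where
  "pG2 t w = 4*t^2*w^2 - 2*(t-1)^2*(2*t-1)*w + 2*(t-1)^4"
definition pG3 :: "real \<Rightarrow> real \<Rightarrow> real" where
  "pG3 t w = 2*(t+1)^2*w^2 - (t-1)^2*(t^2+3)*w - 2*(t-1)^4"
definition pG4 :: "real \<Rightarrow> real \<Rightarrow> real" where
  "pG4 t w = 2*(t-1)^4*w^2"

definition gG :: "real \<Rightarrow> real \<Rightarrow> form4" where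
  "gG t u a b c d = u^2 * (pG0 t (omega u) * s0 a b c d + pG1 t (omega u) * s1 a b c d
      + pG2 t (omega u) * s2 a b c d + pG3 t (omega u) * s3 a b c d
      + pG4 t (omega u) * s4 a b c d)"

definition VF :: "real \<Rightarrow> real \<Rightarrow> real" where
  "VF t w = (3 + 6*t - t^2)*w^2 - 6*(t-1)^2*w"

definition DF :: "real \<Rightarrow> real \<Rightarrow> real" where
  "DF t u = (3 + 6*t - t^2) - (13 + 6*t + 5*t^2)*u + (10 + 9*t + 4*t^2 + t^3)*u^2
            - (1 + 6*t + t^2)*u^3"

end

theory Submission
  imports Defs
begin


lemma exps4_eq: "exps4 = {(0,0,0,4), (0,0,1,3), (0,0,2,2), (0,0,3,1), (0,0,4,0), (0,1,0,3), (0,1,1,2), (0,1,2,1), (0,1,3,0), (0,2,0,2), (0,2,1,1), (0,2,2,0), (0,3,0,1), (0,3,1,0), (0,4,0,0), (1,0,0,3), (1,0,1,2), (1,0,2,1), (1,0,3,0), (1,1,0,2), (1,1,1,1), (1,1,2,0), (1,2,0,1), (1,2,1,0), (1,3,0,0), (2,0,0,2), (2,0,1,1), (2,0,2,0), (2,1,0,1), (2,1,1,0), (2,2,0,0), (3,0,0,1), (3,0,1,0), (3,1,0,0), (4,0,0,0)}"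
proof -
  have A: "(i::nat) \<le> 4 \<Longrightarrow> i = 0 \<or> i = 1 \<or> i = 2 \<or> i = 3 \<or> i = 4" for i by arith
  have B: "(i::nat) + j + k + l = 4 \<Longrightarrow> l = 4 - i - j - k" for i j k l by arith
  show ?thesis unfolding exps4_def
    apply (rule set_eqI)
    apply (clarsimp)
    apply (rule iffI)
     apply (elim conjE)
     apply (frule B)
     apply (drule A)+
     apply (elim disjE; simp)
    apply (elim disjE; simp)
    done
qed


lemma qf_expand:
  assumes "quartic_form f"
  obtains cf :: "nat \<times> nat \<times> nat \<times> nat \<Rightarrow> real" where "\<And>a b c d. f a b c d = cf (0,0,0,4) * (d^4) + cf (0,0,1,3) * (c*d^3) + cf (0,0,2,2) * (c^2*d^2) + cf (0,0,3,1) * (c^3*d) + cf (0,0,4,0) * (c^4) + cf (0,1,0,3) * (b*d^3) + cf (0,1,1,2) * (b*c*d^2) + cf (0,1,2,1) * (b*c^2*d) + cf (0,1,3,0) * (b*c^3) + cf (0,2,0,2) * (b^2*d^2) + cf (0,2,1,1) * (b^2*c*d) + cf (0,2,2,0) * (b^2*c^2) + cf (0,3,0,1) * (b^3*d) + cf (0,3,1,0) * (b^3*c) + cf (0,4,0,0) * (b^4) + cf (1,0,0,3) * (a*d^3) + cf (1,0,1,2) * (a*c*d^2) + cf (1,0,2,1) * (a*c^2*d) + cf (1,0,3,0) * (a*c^3) + cf (1,1,0,2) * (a*b*d^2) + cf (1,1,1,1) * (a*b*c*d) + cf (1,1,2,0) * (a*b*c^2) + cf (1,2,0,1) * (a*b^2*d)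 + cf (1,2,1,0) * (a*b^2*c) + cf (1,3,0,0) * (a*b^3) + cf (2,0,0,2) * (a^2*d^2) + cf (2,0,1,1) * (a^2*c*d) + cf (2,0,2,0) * (a^2*c^2) + cf (2,1,0,1) * (a^2*b*d) + cf (2,1,1,0) * (a^2*b*c) + cf (2,2,0,0) * (a^2*b^2) + cf (3,0,0,1) * (a^3*d) + cf (3,0,1,0) * (a^3*c) + cf (3,1,0,0) * (a^3*b) + cf (4,0,0,0) * (a^4)"
proof -
  from assms obtain cf where cf: "\<forall>a b c d. f a b c d =
       (\<Sum>(i,j,k,l)\<in>exps4. cf (i,j,k,l) * a ^ i * b ^ j * c ^ k * d ^ l)"
    unfolding quartic_form_def by blast
  show ?thesis
    apply (rule that[of cf])
    apply (subst cf[rule_format])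
    apply (simp add: exps4_eq)
    done
qed

definition PY :: "(nat \<Rightarrow> real) \<Rightarrow> real \<Rightarrow> real \<Rightarrow> real \<Rightarrow> real \<Rightarrow> real" where
  "PY k m a b c = k 0 * (m^4) + k 1 * (m^3*a) + k 2 * (m^3*b) + k 3 * (m^3*c) + k 4 * (m^2*a^2) + k 5 * (m^2*a*b) + k 6 * (m^2*a*c) + k 7 * (m^2*b^2) + k 8 * (m^2*b*c) + k 9 * (m^2*c^2) + k 10 * (m*a^3) + k 11 * (m*a^2*b) + k 12 * (m*a^2*c) + k 13 * (m*a*b^2) + k 14 * (m*a*b*c) + k 15 * (m*a*c^2) + k 16 * (m*b^3) + k 17 * (m*b^2*c) + k 18 * (m*b*c^2) + k 19 * (m*c^3) + k 20 * (a^4) + k 21 * (a^3*b) + k 22 * (a^3*c) + k 23 * (a^2*b^2) + k 24 * (a^2*b*c) + k 25 * (a^2*c^2) + k 26 * (a*b^3) + k 27 * (a*b^2*c) + k 28 * (a*b*c^2) + k 29 * (a*c^3) + k 30 * (b^4) + k 31 * (b^3*c) + k 32 * (b^2*c^2) + k 33 * (b*c^3) + k 34 * (c^4)"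

definition PYm :: "(nat \<Rightarrow> real) \<Rightarrow> real \<Rightarrow> real \<Rightarrow> real \<Rightarrow> real \<Rightarrow> real" where
  "PYm k m a b c = 4 * k 0 * (m^3) + 3 * k 1 * (m^2*a) + 3 * k 2 * (m^2*b) + 3 * k 3 * (m^2*c) + 2 * k 4 * (m*a^2) + 2 * k 5 * (m*a*b) + 2 * k 6 * (m*a*c) + 2 * k 7 * (m*b^2) + 2 * k 8 * (m*b*c) + 2 * k 9 * (m*c^2) + 1 * k 10 * (a^3) + 1 * k 11 * (a^2*b) + 1 * k 12 * (a^2*c) + 1 * k 13 * (a*b^2) + 1 * k 14 * (a*b*c) + 1 * k 15 * (a*c^2) + 1 * k 16 * (b^3) + 1 * k 17 * (b^2*c) + 1 * k 18 * (b*c^2) + 1 * k 19 * (c^3)"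

definition PYa :: "(nat \<Rightarrow> real) \<Rightarrow> real \<Rightarrow> real \<Rightarrow> real \<Rightarrow> real \<Rightarrow> real" where
  "PYa k m a b c = 1 * k 1 * (m^3) + 2 * k 4 * (m^2*a) + 1 * k 5 * (m^2*b) + 1 * k 6 * (m^2*c) + 3 * k 10 * (m*a^2) + 2 * k 11 * (m*a*b) + 2 * k 12 * (m*a*c) + 1 * k 13 * (m*b^2) + 1 * k 14 * (m*b*c) + 1 * k 15 * (m*c^2) + 4 * k 20 * (a^3) + 3 * k 21 * (a^2*b) + 3 * k 22 * (a^2*c) + 2 * k 23 * (a*b^2) + 2 * k 24 * (a*b*c) + 2 * k 25 * (a*c^2) + 1 * k 26 * (b^3) + 1 * k 27 * (b^2*c) + 1 * k 28 * (b*c^2) + 1 * k 29 * (c^3)"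

definition PYb :: "(nat \<Rightarrow> real) \<Rightarrow> real \<Rightarrow> real \<Rightarrow> real \<Rightarrow> real \<Rightarrow> real" where
  "PYb k m a b c = 1 * k 2 * (m^3) + 1 * k 5 * (m^2*a) + 2 * k 7 * (m^2*b) + 1 * k 8 * (m^2*c) + 1 * k 11 * (m*a^2) + 2 * k 13 * (m*a*b) + 1 * k 14 * (m*a*c) + 3 * k 16 * (m*b^2) + 2 * k 17 * (m*b*c) + 1 * k 18 * (m*c^2) + 1 * k 21 * (a^3) + 2 * k 23 * (a^2*b) + 1 * k 24 * (a^2*c) + 3 * k 26 * (a*b^2) + 2 * k 27 * (a*b*c) + 1 * k 28 * (a*c^2) + 4 * k 30 * (b^3) + 3 * k 31 * (b^2*c) + 2 * k 32 * (b*c^2) + 1 * k 33 * (c^3)"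

definition PYc :: "(nat \<Rightarrow> real) \<Rightarrow> real \<Rightarrow> real \<Rightarrow> real \<Rightarrow> real \<Rightarrow> real" where
  "PYc k m a b c = 1 * k 3 * (m^3) + 1 * k 6 * (m^2*a) + 1 * k 8 * (m^2*b) + 2 * k 9 * (m^2*c) + 1 * k 12 * (m*a^2) + 1 * k 14 * (m*a*b) + 2 * k 15 * (m*a*c) + 1 * k 17 * (m*b^2) + 2 * k 18 * (m*b*c) + 3 * k 19 * (m*c^2) + 1 * k 22 * (a^3) + 1 * k 24 * (a^2*b) + 2 * k 25 * (a^2*c) + 1 * k 27 * (a*b^2) + 2 * k 28 * (a*b*c) + 3 * k 29 * (a*c^2) + 1 * k 31 * (b^3) + 2 * k 32 * (b^2*c) + 3 * k 33 * (b*c^2) + 4 * k 34 * (c^3)"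


lemma transform:
  assumes "quartic_form f"
  shows "\<exists>k. \<forall>m a b c. f (m+a+b+c) (m+a-b-c) (m-a+b-c) (m-a-b+c) = PY k m a b c"
proof -
  obtain cf :: "nat \<times> nat \<times> nat \<times> nat \<Rightarrow> real" where cf: "\<And>a b c d. f a b c d = cf (0,0,0,4) * (d^4) + cf (0,0,1,3) * (c*d^3) + cf (0,0,2,2) * (c^2*d^2) + cf (0,0,3,1) * (c^3*d) + cf (0,0,4,0) * (c^4) + cf (0,1,0,3) * (b*d^3) + cf (0,1,1,2) * (b*c*d^2) + cf (0,1,2,1) * (b*c^2*d) + cf (0,1,3,0) * (b*c^3) + cf (0,2,0,2) * (b^2*d^2) + cf (0,2,1,1) * (b^2*c*d) + cf (0,2,2,0) * (b^2*c^2) + cf (0,3,0,1) * (b^3*d) + cf (0,3,1,0) * (b^3*c) + cf (0,4,0,0) * (b^4) + cf (1,0,0,3) * (a*d^3) + cf (1,0,1,2) * (a*c*d^2) + cf (1,0,2,1) * (a*c^2*d) + cf (1,0,3,0) * (a*c^3) + cf (1,1,0,2) * (a*b*d^2) + cf (1,1,1,1) * (a*b*c*d) + cf (1,1,2,0) * (a*b*c^2) + cf (1,2,0,1) * (a*b^2*d) + cf (1,2,1,0) * (a*b^2*c) + cf (1,3,0,0) * (a*b^3) + cf (2,0,0,2) * (a^2*d^2) + cf (2,0,1,1) * (a^2*c*d) + cf (2,0,2,0) * (a^2*c^2) + cf (2,1,0,1) * (a^2*b*d) + cf (2,1,1,0) * (a^2*b*c) + cf (2,2,0,0) * (a^2*b^2)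 + cf (3,0,0,1) * (a^3*d) + cf (3,0,1,0) * (a^3*c) + cf (3,1,0,0) * (a^3*b) + cf (4,0,0,0) * (a^4)"
    using qf_expand[OF assms] by blast
  show ?thesis
    apply (rule exI[of _ "\<lambda>i. [(1) * cf (0,0,0,4) + (1) * cf (0,0,1,3) + (1) * cf (0,0,2,2) + (1) * cf (0,0,3,1) + (1) * cf (0,0,4,0) + (1) * cf (0,1,0,3) + (1) * cf (0,1,1,2) + (1) * cf (0,1,2,1) + (1) * cf (0,1,3,0) + (1) * cf (0,2,0,2) + (1) * cf (0,2,1,1) + (1) * cf (0,2,2,0) + (1) * cf (0,3,0,1) + (1) * cf (0,3,1,0) + (1) * cf (0,4,0,0) + (1) * cf (1,0,0,3) + (1) * cf (1,0,1,2) + (1) * cf (1,0,2,1) + (1) * cf (1,0,3,0) + (1) * cf (1,1,0,2) + (1) * cf (1,1,1,1) + (1) * cf (1,1,2,0) + (1) * cf (1,2,0,1) + (1) * cf (1,2,1,0) + (1) * cf (1,3,0,0) + (1) * cf (2,0,0,2) + (1) * cf (2,0,1,1) + (1) * cf (2,0,2,0) + (1) * cf (2,1,0,1) + (1) * cf (2,1,1,0) + (1) * cf (2,2,0,0) + (1) * cf (3,0,0,1) + (1) * cf (3,0,1,0) + (1) * cf (3,1,0,0) + (1) * cf (4,0,0,0), (-4) * cf (0,0,0,4) + (-4) * cf (0,0,1,3) + (-4) * cf (0,0,2,2) + (-4) * cf (0,0,3,1) + (-4) * cf (0,0,4,0) + (-2) * cf (0,1,0,3) + (-2) * cf (0,1,1,2)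 + (-2) * cf (0,1,2,1) + (-2) * cf (0,1,3,0) + (2) * cf (0,3,0,1) + (2) * cf (0,3,1,0) + (4) * cf (0,4,0,0) + (-2) * cf (1,0,0,3) + (-2) * cf (1,0,1,2) + (-2) * cf (1,0,2,1) + (-2) * cf (1,0,3,0) + (2) * cf (1,2,0,1) + (2) * cf (1,2,1,0) + (4) * cf (1,3,0,0) + (2) * cf (2,1,0,1) + (2) * cf (2,1,1,0) + (4) * cf (2,2,0,0) + (2) * cf (3,0,0,1) + (2) * cf (3,0,1,0) + (4) * cf (3,1,0,0) + (4) * cf (4,0,0,0), (-4) * cf (0,0,0,4) + (-2) * cf (0,0,1,3) + (2) * cf (0,0,3,1) + (4) * cf (0,0,4,0) + (-4) * cf (0,1,0,3) + (-2) * cf (0,1,1,2) + (2) * cf (0,1,3,0) + (-4) * cf (0,2,0,2) + (-2) * cf (0,2,1,1) + (-4) * cf (0,3,0,1) + (-2) * cf (0,3,1,0) + (-4) * cf (0,4,0,0) + (-2) * cf (1,0,0,3) + (2) * cf (1,0,2,1) + (4) * cf (1,0,3,0) + (-2) * cf (1,1,0,2) + (2) * cf (1,1,2,0) + (-2) * cf (1,2,0,1) + (-2) * cf (1,3,0,0) + (2) * cf (2,0,1,1) + (4) * cf (2,0,2,0) + (2) * cf (2,1,1,0) + (2) * cf (3,0,0,1) + (4) * cf (3,0,1,0) + (2) * cf (3,1,0,0) + (4) * cf (4,0,0,0), (4) * cf (0,0,0,4) + (2) * cf (0,0,1,3) + (-2) * cf (0,0,3,1) + (-4) * cf (0,0,4,0)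 + (2) * cf (0,1,0,3) + (-2) * cf (0,1,2,1) + (-4) * cf (0,1,3,0) + (-2) * cf (0,2,1,1) + (-4) * cf (0,2,2,0) + (-2) * cf (0,3,0,1) + (-4) * cf (0,3,1,0) + (-4) * cf (0,4,0,0) + (4) * cf (1,0,0,3) + (2) * cf (1,0,1,2) + (-2) * cf (1,0,3,0) + (2) * cf (1,1,0,2) + (-2) * cf (1,1,2,0) + (-2) * cf (1,2,1,0) + (-2) * cf (1,3,0,0) + (4) * cf (2,0,0,2) + (2) * cf (2,0,1,1) + (2) * cf (2,1,0,1) + (4) * cf (3,0,0,1) + (2) * cf (3,0,1,0) + (2) * cf (3,1,0,0) + (4) * cf (4,0,0,0), (6) * cf (0,0,0,4) + (6) * cf (0,0,1,3) + (6) * cf (0,0,2,2) + (6) * cf (0,0,3,1) + (6) * cf (0,0,4,0) + (-2) * cf (0,2,0,2) + (-2) * cf (0,2,1,1) + (-2) * cf (0,2,2,0) + (6) * cf (0,4,0,0) + (-2) * cf (1,1,0,2) + (-2) * cf (1,1,1,1) + (-2) * cf (1,1,2,0) + (6) * cf (1,3,0,0) + (-2) * cf (2,0,0,2) + (-2) * cf (2,0,1,1) + (-2) * cf (2,0,2,0) + (6) * cf (2,2,0,0) + (6) * cf (3,1,0,0) + (6) * cf (4,0,0,0), (12) * cf (0,0,0,4) + (6) * cf (0,0,1,3) + (-6) * cf (0,0,3,1) + (-12) * cf (0,0,4,0) + (6) * cf (0,1,0,3) + (4) * cf (0,1,1,2) + (2) * cf (0,1,2,1) + (2) * cf (0,2,1,1)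 + (4) * cf (0,2,2,0) + (-6) * cf (0,3,0,1) + (-12) * cf (0,4,0,0) + (-2) * cf (1,0,1,2) + (-4) * cf (1,0,2,1) + (-6) * cf (1,0,3,0) + (-2) * cf (1,1,0,2) + (2) * cf (1,1,2,0) + (-4) * cf (1,2,0,1) + (2) * cf (1,2,1,0) + (-6) * cf (1,3,0,0) + (-4) * cf (2,0,0,2) + (-2) * cf (2,0,1,1) + (-2) * cf (2,1,0,1) + (4) * cf (2,1,1,0) + (6) * cf (3,0,1,0) + (6) * cf (3,1,0,0) + (12) * cf (4,0,0,0), (-12) * cf (0,0,0,4) + (-6) * cf (0,0,1,3) + (6) * cf (0,0,3,1) + (12) * cf (0,0,4,0) + (2) * cf (0,1,1,2) + (4) * cf (0,1,2,1) + (6) * cf (0,1,3,0) + (4) * cf (0,2,0,2) + (2) * cf (0,2,1,1) + (-6) * cf (0,3,1,0) + (-12) * cf (0,4,0,0) + (-6) * cf (1,0,0,3) + (-4) * cf (1,0,1,2) + (-2) * cf (1,0,2,1) + (2) * cf (1,1,0,2) + (-2) * cf (1,1,2,0) + (2) * cf (1,2,0,1) + (-4) * cf (1,2,1,0) + (-6) * cf (1,3,0,0) + (-2) * cf (2,0,1,1) + (-4) * cf (2,0,2,0) + (4) * cf (2,1,0,1) + (-2) * cf (2,1,1,0) + (6) * cf (3,0,0,1) + (6) * cf (3,1,0,0) + (12) * cf (4,0,0,0), (6) * cf (0,0,0,4) + (-2) * cf (0,0,2,2) + (6) * cf (0,0,4,0) + (6) * cf (0,1,0,3) + (-2) * cf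 (0,1,2,1) + (6) * cf (0,2,0,2) + (-2) * cf (0,2,2,0) + (6) * cf (0,3,0,1) + (6) * cf (0,4,0,0) + (-2) * cf (1,0,1,2) + (6) * cf (1,0,3,0) + (-2) * cf (1,1,1,1) + (-2) * cf (1,2,1,0) + (-2) * cf (2,0,0,2) + (6) * cf (2,0,2,0) + (-2) * cf (2,1,0,1) + (-2) * cf (2,2,0,0) + (6) * cf (3,0,1,0) + (6) * cf (4,0,0,0), (-12) * cf (0,0,0,4) + (4) * cf (0,0,2,2) + (-12) * cf (0,0,4,0) + (-6) * cf (0,1,0,3) + (2) * cf (0,1,1,2) + (2) * cf (0,1,2,1) + (-6) * cf (0,1,3,0) + (4) * cf (0,2,1,1) + (6) * cf (0,3,0,1) + (6) * cf (0,3,1,0) + (12) * cf (0,4,0,0) + (-6) * cf (1,0,0,3) + (2) * cf (1,0,1,2) + (2) * cf (1,0,2,1) + (-6) * cf (1,0,3,0) + (-4) * cf (1,1,0,2) + (-4) * cf (1,1,2,0) + (-2) * cf (1,2,0,1) + (-2) * cf (1,2,1,0) + (4) * cf (2,0,1,1) + (-2) * cf (2,1,0,1) + (-2) * cf (2,1,1,0) + (-4) * cf (2,2,0,0) + (6) * cf (3,0,0,1) + (6) * cf (3,0,1,0) + (12) * cf (4,0,0,0), (6) * cf (0,0,0,4) + (-2) * cf (0,0,2,2) + (6) * cf (0,0,4,0) + (-2) * cf (0,1,1,2) + (6) * cf (0,1,3,0) + (-2) * cf (0,2,0,2) + (6) * cf (0,2,2,0) + (6) * cf (0,3,1,0) +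 (6) * cf (0,4,0,0) + (6) * cf (1,0,0,3) + (-2) * cf (1,0,2,1) + (-2) * cf (1,1,1,1) + (-2) * cf (1,2,0,1) + (6) * cf (2,0,0,2) + (-2) * cf (2,0,2,0) + (-2) * cf (2,1,1,0) + (-2) * cf (2,2,0,0) + (6) * cf (3,0,0,1) + (6) * cf (4,0,0,0), (-4) * cf (0,0,0,4) + (-4) * cf (0,0,1,3) + (-4) * cf (0,0,2,2) + (-4) * cf (0,0,3,1) + (-4) * cf (0,0,4,0) + (2) * cf (0,1,0,3) + (2) * cf (0,1,1,2) + (2) * cf (0,1,2,1) + (2) * cf (0,1,3,0) + (-2) * cf (0,3,0,1) + (-2) * cf (0,3,1,0) + (4) * cf (0,4,0,0) + (2) * cf (1,0,0,3) + (2) * cf (1,0,1,2) + (2) * cf (1,0,2,1) + (2) * cf (1,0,3,0) + (-2) * cf (1,2,0,1) + (-2) * cf (1,2,1,0) + (4) * cf (1,3,0,0) + (-2) * cf (2,1,0,1) + (-2) * cf (2,1,1,0) + (4) * cf (2,2,0,0) + (-2) * cf (3,0,0,1) + (-2) * cf (3,0,1,0) + (4) * cf (3,1,0,0) + (4) * cf (4,0,0,0), (-12) * cf (0,0,0,4) + (-6) * cf (0,0,1,3) + (6) * cf (0,0,3,1) + (12) * cf (0,0,4,0) + (-2) * cf (0,1,1,2) + (-4) * cf (0,1,2,1) + (-6) * cf (0,1,3,0) + (4) * cf (0,2,0,2) + (2) * cf (0,2,1,1) + (6) * cf (0,3,1,0) + (-12) * cf (0,4,0,0) + (6) * cf (1,0,0,3)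 + (4) * cf (1,0,1,2) + (2) * cf (1,0,2,1) + (2) * cf (1,1,0,2) + (-2) * cf (1,1,2,0) + (-2) * cf (1,2,0,1) + (4) * cf (1,2,1,0) + (-6) * cf (1,3,0,0) + (-2) * cf (2,0,1,1) + (-4) * cf (2,0,2,0) + (-4) * cf (2,1,0,1) + (2) * cf (2,1,1,0) + (-6) * cf (3,0,0,1) + (6) * cf (3,1,0,0) + (12) * cf (4,0,0,0), (12) * cf (0,0,0,4) + (6) * cf (0,0,1,3) + (-6) * cf (0,0,3,1) + (-12) * cf (0,0,4,0) + (-6) * cf (0,1,0,3) + (-4) * cf (0,1,1,2) + (-2) * cf (0,1,2,1) + (2) * cf (0,2,1,1) + (4) * cf (0,2,2,0) + (6) * cf (0,3,0,1) + (-12) * cf (0,4,0,0) + (2) * cf (1,0,1,2) + (4) * cf (1,0,2,1) + (6) * cf (1,0,3,0) + (-2) * cf (1,1,0,2) + (2) * cf (1,1,2,0) + (4) * cf (1,2,0,1) + (-2) * cf (1,2,1,0) + (-6) * cf (1,3,0,0) + (-4) * cf (2,0,0,2) + (-2) * cf (2,0,1,1) + (2) * cf (2,1,0,1) + (-4) * cf (2,1,1,0) + (-6) * cf (3,0,1,0) + (6) * cf (3,1,0,0) + (12) * cf (4,0,0,0), (-12) * cf (0,0,0,4) + (4) * cf (0,0,2,2) + (-12) * cf (0,0,4,0) + (-6) * cf (0,1,0,3) + (-2) * cf (0,1,1,2) + (2) * cf (0,1,2,1) + (6) * cf (0,1,3,0) + (-4) * cf (0,2,1,1) + (6) * cf (0,3,0,1)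 + (-6) * cf (0,3,1,0) + (12) * cf (0,4,0,0) + (6) * cf (1,0,0,3) + (2) * cf (1,0,1,2) + (-2) * cf (1,0,2,1) + (-6) * cf (1,0,3,0) + (4) * cf (1,1,0,2) + (4) * cf (1,1,2,0) + (2) * cf (1,2,0,1) + (-2) * cf (1,2,1,0) + (-4) * cf (2,0,1,1) + (-2) * cf (2,1,0,1) + (2) * cf (2,1,1,0) + (-4) * cf (2,2,0,0) + (-6) * cf (3,0,0,1) + (6) * cf (3,0,1,0) + (12) * cf (4,0,0,0), (24) * cf (0,0,0,4) + (-8) * cf (0,0,2,2) + (24) * cf (0,0,4,0) + (-8) * cf (0,2,0,2) + (-8) * cf (0,2,2,0) + (24) * cf (0,4,0,0) + (8) * cf (1,1,1,1) + (-8) * cf (2,0,0,2) + (-8) * cf (2,0,2,0) + (-8) * cf (2,2,0,0) + (24) * cf (4,0,0,0), (-12) * cf (0,0,0,4) + (4) * cf (0,0,2,2) + (-12) * cf (0,0,4,0) + (6) * cf (0,1,0,3) + (2) * cf (0,1,1,2) + (-2) * cf (0,1,2,1) + (-6) * cf (0,1,3,0) + (-4) * cf (0,2,1,1) + (-6) * cf (0,3,0,1) + (6) * cf (0,3,1,0) + (12) * cf (0,4,0,0) + (-6) * cf (1,0,0,3) + (-2) * cf (1,0,1,2) + (2) * cf (1,0,2,1) + (6) * cf (1,0,3,0) + (4) * cf (1,1,0,2) + (4) * cf (1,1,2,0) + (-2) * cf (1,2,0,1) + (2) * cf (1,2,1,0) + (-4) * cf (2,0,1,1) + (2) * cf (2,1,0,1)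 + (-2) * cf (2,1,1,0) + (-4) * cf (2,2,0,0) + (6) * cf (3,0,0,1) + (-6) * cf (3,0,1,0) + (12) * cf (4,0,0,0), (-4) * cf (0,0,0,4) + (2) * cf (0,0,1,3) + (-2) * cf (0,0,3,1) + (4) * cf (0,0,4,0) + (-4) * cf (0,1,0,3) + (2) * cf (0,1,1,2) + (-2) * cf (0,1,3,0) + (-4) * cf (0,2,0,2) + (2) * cf (0,2,1,1) + (-4) * cf (0,3,0,1) + (2) * cf (0,3,1,0) + (-4) * cf (0,4,0,0) + (2) * cf (1,0,0,3) + (-2) * cf (1,0,2,1) + (4) * cf (1,0,3,0) + (2) * cf (1,1,0,2) + (-2) * cf (1,1,2,0) + (2) * cf (1,2,0,1) + (2) * cf (1,3,0,0) + (-2) * cf (2,0,1,1) + (4) * cf (2,0,2,0) + (-2) * cf (2,1,1,0) + (-2) * cf (3,0,0,1) + (4) * cf (3,0,1,0) + (-2) * cf (3,1,0,0) + (4) * cf (4,0,0,0), (12) * cf (0,0,0,4) + (-6) * cf (0,0,1,3) + (6) * cf (0,0,3,1) + (-12) * cf (0,0,4,0) + (6) * cf (0,1,0,3) + (-4) * cf (0,1,1,2) + (2) * cf (0,1,2,1) + (-2) * cf (0,2,1,1) + (4) * cf (0,2,2,0) + (-6) * cf (0,3,0,1) + (-12) * cf (0,4,0,0) + (-2) * cf (1,0,1,2) + (4) * cf (1,0,2,1) + (-6) * cf (1,0,3,0) + (2) * cf (1,1,0,2) + (-2) * cf (1,1,2,0) + (4) * cf (1,2,0,1) + (2) * cf (1,2,1,0)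 + (6) * cf (1,3,0,0) + (-4) * cf (2,0,0,2) + (2) * cf (2,0,1,1) + (-2) * cf (2,1,0,1) + (-4) * cf (2,1,1,0) + (6) * cf (3,0,1,0) + (-6) * cf (3,1,0,0) + (12) * cf (4,0,0,0), (-12) * cf (0,0,0,4) + (6) * cf (0,0,1,3) + (-6) * cf (0,0,3,1) + (12) * cf (0,0,4,0) + (2) * cf (0,1,1,2) + (-4) * cf (0,1,2,1) + (6) * cf (0,1,3,0) + (4) * cf (0,2,0,2) + (-2) * cf (0,2,1,1) + (-6) * cf (0,3,1,0) + (-12) * cf (0,4,0,0) + (-6) * cf (1,0,0,3) + (4) * cf (1,0,1,2) + (-2) * cf (1,0,2,1) + (-2) * cf (1,1,0,2) + (2) * cf (1,1,2,0) + (2) * cf (1,2,0,1) + (4) * cf (1,2,1,0) + (6) * cf (1,3,0,0) + (2) * cf (2,0,1,1) + (-4) * cf (2,0,2,0) + (-4) * cf (2,1,0,1) + (-2) * cf (2,1,1,0) + (6) * cf (3,0,0,1) + (-6) * cf (3,1,0,0) + (12) * cf (4,0,0,0), (4) * cf (0,0,0,4) + (-2) * cf (0,0,1,3) + (2) * cf (0,0,3,1) + (-4) * cf (0,0,4,0) + (-2) * cf (0,1,0,3) + (2) * cf (0,1,2,1) + (-4) * cf (0,1,3,0) + (2) * cf (0,2,1,1) + (-4) * cf (0,2,2,0) + (2) * cf (0,3,0,1) + (-4) * cf (0,3,1,0) + (-4) * cf (0,4,0,0) + (4) * cf (1,0,0,3) + (-2) * cf (1,0,1,2) + (2) * cf (1,0,3,0)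 + (-2) * cf (1,1,0,2) + (2) * cf (1,1,2,0) + (2) * cf (1,2,1,0) + (2) * cf (1,3,0,0) + (4) * cf (2,0,0,2) + (-2) * cf (2,0,1,1) + (-2) * cf (2,1,0,1) + (4) * cf (3,0,0,1) + (-2) * cf (3,0,1,0) + (-2) * cf (3,1,0,0) + (4) * cf (4,0,0,0), (1) * cf (0,0,0,4) + (1) * cf (0,0,1,3) + (1) * cf (0,0,2,2) + (1) * cf (0,0,3,1) + (1) * cf (0,0,4,0) + (-1) * cf (0,1,0,3) + (-1) * cf (0,1,1,2) + (-1) * cf (0,1,2,1) + (-1) * cf (0,1,3,0) + (1) * cf (0,2,0,2) + (1) * cf (0,2,1,1) + (1) * cf (0,2,2,0) + (-1) * cf (0,3,0,1) + (-1) * cf (0,3,1,0) + (1) * cf (0,4,0,0) + (-1) * cf (1,0,0,3) + (-1) * cf (1,0,1,2) + (-1) * cf (1,0,2,1) + (-1) * cf (1,0,3,0) + (1) * cf (1,1,0,2) + (1) * cf (1,1,1,1) + (1) * cf (1,1,2,0) + (-1) * cf (1,2,0,1) + (-1) * cf (1,2,1,0) + (1) * cf (1,3,0,0) + (1) * cf (2,0,0,2) + (1) * cf (2,0,1,1) + (1) * cf (2,0,2,0) + (-1) * cf (2,1,0,1) + (-1) * cf (2,1,1,0) + (1) * cf (2,2,0,0) + (-1) * cf (3,0,0,1) + (-1) * cf (3,0,1,0) + (1) * cf (3,1,0,0) + (1) * cf (4,0,0,0), (4) * cf (0,0,0,4) + (2) * cf (0,0,1,3) + (-2) * cf (0,0,3,1)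 + (-4) * cf (0,0,4,0) + (-2) * cf (0,1,0,3) + (2) * cf (0,1,2,1) + (4) * cf (0,1,3,0) + (-2) * cf (0,2,1,1) + (-4) * cf (0,2,2,0) + (2) * cf (0,3,0,1) + (4) * cf (0,3,1,0) + (-4) * cf (0,4,0,0) + (-4) * cf (1,0,0,3) + (-2) * cf (1,0,1,2) + (2) * cf (1,0,3,0) + (2) * cf (1,1,0,2) + (-2) * cf (1,1,2,0) + (2) * cf (1,2,1,0) + (-2) * cf (1,3,0,0) + (4) * cf (2,0,0,2) + (2) * cf (2,0,1,1) + (-2) * cf (2,1,0,1) + (-4) * cf (3,0,0,1) + (-2) * cf (3,0,1,0) + (2) * cf (3,1,0,0) + (4) * cf (4,0,0,0), (-4) * cf (0,0,0,4) + (-2) * cf (0,0,1,3) + (2) * cf (0,0,3,1) + (4) * cf (0,0,4,0) + (4) * cf (0,1,0,3) + (2) * cf (0,1,1,2) + (-2) * cf (0,1,3,0) + (-4) * cf (0,2,0,2) + (-2) * cf (0,2,1,1) + (4) * cf (0,3,0,1) + (2) * cf (0,3,1,0) + (-4) * cf (0,4,0,0) + (2) * cf (1,0,0,3) + (-2) * cf (1,0,2,1) + (-4) * cf (1,0,3,0) + (-2) * cf (1,1,0,2) + (2) * cf (1,1,2,0) + (2) * cf (1,2,0,1) + (-2) * cf (1,3,0,0) + (2) * cf (2,0,1,1) + (4) * cf (2,0,2,0) + (-2) * cf (2,1,1,0) + (-2) * cf (3,0,0,1) + (-4) * cf (3,0,1,0) + (2) * cf (3,1,0,0) + (4) * cf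 (4,0,0,0), (6) * cf (0,0,0,4) + (-2) * cf (0,0,2,2) + (6) * cf (0,0,4,0) + (2) * cf (0,1,1,2) + (-6) * cf (0,1,3,0) + (-2) * cf (0,2,0,2) + (6) * cf (0,2,2,0) + (-6) * cf (0,3,1,0) + (6) * cf (0,4,0,0) + (-6) * cf (1,0,0,3) + (2) * cf (1,0,2,1) + (-2) * cf (1,1,1,1) + (2) * cf (1,2,0,1) + (6) * cf (2,0,0,2) + (-2) * cf (2,0,2,0) + (2) * cf (2,1,1,0) + (-2) * cf (2,2,0,0) + (-6) * cf (3,0,0,1) + (6) * cf (4,0,0,0), (-12) * cf (0,0,0,4) + (4) * cf (0,0,2,2) + (-12) * cf (0,0,4,0) + (6) * cf (0,1,0,3) + (-2) * cf (0,1,1,2) + (-2) * cf (0,1,2,1) + (6) * cf (0,1,3,0) + (4) * cf (0,2,1,1) + (-6) * cf (0,3,0,1) + (-6) * cf (0,3,1,0) + (12) * cf (0,4,0,0) + (6) * cf (1,0,0,3) + (-2) * cf (1,0,1,2) + (-2) * cf (1,0,2,1) + (6) * cf (1,0,3,0) + (-4) * cf (1,1,0,2) + (-4) * cf (1,1,2,0) + (2) * cf (1,2,0,1) + (2) * cf (1,2,1,0) + (4) * cf (2,0,1,1) + (2) * cf (2,1,0,1) + (2) * cf (2,1,1,0) + (-4) * cf (2,2,0,0) + (-6) * cf (3,0,0,1) + (-6) * cf (3,0,1,0) + (12) * cf (4,0,0,0), (6) * cf (0,0,0,4) + (-2) * cf (0,0,2,2) + (6) * cf (0,0,4,0) + (-6)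 * cf (0,1,0,3) + (2) * cf (0,1,2,1) + (6) * cf (0,2,0,2) + (-2) * cf (0,2,2,0) + (-6) * cf (0,3,0,1) + (6) * cf (0,4,0,0) + (2) * cf (1,0,1,2) + (-6) * cf (1,0,3,0) + (-2) * cf (1,1,1,1) + (2) * cf (1,2,1,0) + (-2) * cf (2,0,0,2) + (6) * cf (2,0,2,0) + (2) * cf (2,1,0,1) + (-2) * cf (2,2,0,0) + (-6) * cf (3,0,1,0) + (6) * cf (4,0,0,0), (4) * cf (0,0,0,4) + (-2) * cf (0,0,1,3) + (2) * cf (0,0,3,1) + (-4) * cf (0,0,4,0) + (2) * cf (0,1,0,3) + (-2) * cf (0,1,2,1) + (4) * cf (0,1,3,0) + (2) * cf (0,2,1,1) + (-4) * cf (0,2,2,0) + (-2) * cf (0,3,0,1) + (4) * cf (0,3,1,0) + (-4) * cf (0,4,0,0) + (-4) * cf (1,0,0,3) + (2) * cf (1,0,1,2) + (-2) * cf (1,0,3,0) + (-2) * cf (1,1,0,2) + (2) * cf (1,1,2,0) + (-2) * cf (1,2,1,0) + (2) * cf (1,3,0,0) + (4) * cf (2,0,0,2) + (-2) * cf (2,0,1,1) + (2) * cf (2,1,0,1) + (-4) * cf (3,0,0,1) + (2) * cf (3,0,1,0) + (-2) * cf (3,1,0,0) + (4) * cf (4,0,0,0), (-12) * cf (0,0,0,4) + (6) * cf (0,0,1,3) + (-6) * cf (0,0,3,1) + (12) * cf (0,0,4,0) + (-2) * cf (0,1,1,2) + (4) * cf (0,1,2,1) + (-6) * cf (0,1,3,0)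 + (4) * cf (0,2,0,2) + (-2) * cf (0,2,1,1) + (6) * cf (0,3,1,0) + (-12) * cf (0,4,0,0) + (6) * cf (1,0,0,3) + (-4) * cf (1,0,1,2) + (2) * cf (1,0,2,1) + (-2) * cf (1,1,0,2) + (2) * cf (1,1,2,0) + (-2) * cf (1,2,0,1) + (-4) * cf (1,2,1,0) + (6) * cf (1,3,0,0) + (2) * cf (2,0,1,1) + (-4) * cf (2,0,2,0) + (4) * cf (2,1,0,1) + (2) * cf (2,1,1,0) + (-6) * cf (3,0,0,1) + (-6) * cf (3,1,0,0) + (12) * cf (4,0,0,0), (12) * cf (0,0,0,4) + (-6) * cf (0,0,1,3) + (6) * cf (0,0,3,1) + (-12) * cf (0,0,4,0) + (-6) * cf (0,1,0,3) + (4) * cf (0,1,1,2) + (-2) * cf (0,1,2,1) + (-2) * cf (0,2,1,1) + (4) * cf (0,2,2,0) + (6) * cf (0,3,0,1) + (-12) * cf (0,4,0,0) + (2) * cf (1,0,1,2) + (-4) * cf (1,0,2,1) + (6) * cf (1,0,3,0) + (2) * cf (1,1,0,2) + (-2) * cf (1,1,2,0) + (-4) * cf (1,2,0,1) + (-2) * cf (1,2,1,0) + (6) * cf (1,3,0,0) + (-4) * cf (2,0,0,2) + (2) * cf (2,0,1,1) + (2) * cf (2,1,0,1) + (4) * cf (2,1,1,0) + (-6) * cf (3,0,1,0) + (-6) * cf (3,1,0,0) + (12) * cf (4,0,0,0), (-4) * cf (0,0,0,4) + (2) * cf (0,0,1,3) + (-2) * cf (0,0,3,1) + (4) * cf (0,0,4,0)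 + (4) * cf (0,1,0,3) + (-2) * cf (0,1,1,2) + (2) * cf (0,1,3,0) + (-4) * cf (0,2,0,2) + (2) * cf (0,2,1,1) + (4) * cf (0,3,0,1) + (-2) * cf (0,3,1,0) + (-4) * cf (0,4,0,0) + (-2) * cf (1,0,0,3) + (2) * cf (1,0,2,1) + (-4) * cf (1,0,3,0) + (2) * cf (1,1,0,2) + (-2) * cf (1,1,2,0) + (-2) * cf (1,2,0,1) + (2) * cf (1,3,0,0) + (-2) * cf (2,0,1,1) + (4) * cf (2,0,2,0) + (2) * cf (2,1,1,0) + (2) * cf (3,0,0,1) + (-4) * cf (3,0,1,0) + (-2) * cf (3,1,0,0) + (4) * cf (4,0,0,0), (1) * cf (0,0,0,4) + (-1) * cf (0,0,1,3) + (1) * cf (0,0,2,2) + (-1) * cf (0,0,3,1) + (1) * cf (0,0,4,0) + (1) * cf (0,1,0,3) + (-1) * cf (0,1,1,2) + (1) * cf (0,1,2,1) + (-1) * cf (0,1,3,0) + (1) * cf (0,2,0,2) + (-1) * cf (0,2,1,1) + (1) * cf (0,2,2,0) + (1) * cf (0,3,0,1) + (-1) * cf (0,3,1,0) + (1) * cf (0,4,0,0) + (-1) * cf (1,0,0,3) + (1) * cf (1,0,1,2) + (-1) * cf (1,0,2,1) + (1) * cf (1,0,3,0) + (-1) * cf (1,1,0,2) + (1) * cf (1,1,1,1) + (-1) * cf (1,1,2,0) + (-1) * cf (1,2,0,1) + (1) * cf (1,2,1,0) + (-1) * cf (1,3,0,0) + (1) * cf (2,0,0,2) + (-1) * cf (2,0,1,1)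 + (1) * cf (2,0,2,0) + (1) * cf (2,1,0,1) + (-1) * cf (2,1,1,0) + (1) * cf (2,2,0,0) + (-1) * cf (3,0,0,1) + (1) * cf (3,0,1,0) + (-1) * cf (3,1,0,0) + (1) * cf (4,0,0,0), (-4) * cf (0,0,0,4) + (4) * cf (0,0,1,3) + (-4) * cf (0,0,2,2) + (4) * cf (0,0,3,1) + (-4) * cf (0,0,4,0) + (-2) * cf (0,1,0,3) + (2) * cf (0,1,1,2) + (-2) * cf (0,1,2,1) + (2) * cf (0,1,3,0) + (2) * cf (0,3,0,1) + (-2) * cf (0,3,1,0) + (4) * cf (0,4,0,0) + (2) * cf (1,0,0,3) + (-2) * cf (1,0,1,2) + (2) * cf (1,0,2,1) + (-2) * cf (1,0,3,0) + (-2) * cf (1,2,0,1) + (2) * cf (1,2,1,0) + (-4) * cf (1,3,0,0) + (2) * cf (2,1,0,1) + (-2) * cf (2,1,1,0) + (4) * cf (2,2,0,0) + (-2) * cf (3,0,0,1) + (2) * cf (3,0,1,0) + (-4) * cf (3,1,0,0) + (4) * cf (4,0,0,0), (6) * cf (0,0,0,4) + (-6) * cf (0,0,1,3) + (6) * cf (0,0,2,2) + (-6) * cf (0,0,3,1) + (6) * cf (0,0,4,0) + (-2) * cf (0,2,0,2) + (2) * cf (0,2,1,1) + (-2) * cf (0,2,2,0) + (6) * cf (0,4,0,0) + (2) * cf (1,1,0,2) + (-2) * cf (1,1,1,1) + (2) * cf (1,1,2,0) + (-6) * cf (1,3,0,0) + (-2) * cf (2,0,0,2) + (2) * cf (2,0,1,1)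 + (-2) * cf (2,0,2,0) + (6) * cf (2,2,0,0) + (-6) * cf (3,1,0,0) + (6) * cf (4,0,0,0), (-4) * cf (0,0,0,4) + (4) * cf (0,0,1,3) + (-4) * cf (0,0,2,2) + (4) * cf (0,0,3,1) + (-4) * cf (0,0,4,0) + (2) * cf (0,1,0,3) + (-2) * cf (0,1,1,2) + (2) * cf (0,1,2,1) + (-2) * cf (0,1,3,0) + (-2) * cf (0,3,0,1) + (2) * cf (0,3,1,0) + (4) * cf (0,4,0,0) + (-2) * cf (1,0,0,3) + (2) * cf (1,0,1,2) + (-2) * cf (1,0,2,1) + (2) * cf (1,0,3,0) + (2) * cf (1,2,0,1) + (-2) * cf (1,2,1,0) + (-4) * cf (1,3,0,0) + (-2) * cf (2,1,0,1) + (2) * cf (2,1,1,0) + (4) * cf (2,2,0,0) + (2) * cf (3,0,0,1) + (-2) * cf (3,0,1,0) + (-4) * cf (3,1,0,0) + (4) * cf (4,0,0,0), (1) * cf (0,0,0,4) + (-1) * cf (0,0,1,3) + (1) * cf (0,0,2,2) + (-1) * cf (0,0,3,1) + (1) * cf (0,0,4,0) + (-1) * cf (0,1,0,3) + (1) * cf (0,1,1,2) + (-1) * cf (0,1,2,1) + (1) * cf (0,1,3,0) + (1) * cf (0,2,0,2) + (-1) * cf (0,2,1,1) + (1) * cf (0,2,2,0) + (-1) * cf (0,3,0,1) + (1) * cf (0,3,1,0) + (1) * cf (0,4,0,0) + (1) * cf (1,0,0,3) + (-1) * cf (1,0,1,2) + (1) * cf (1,0,2,1) + (-1) * cf (1,0,3,0)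 + (-1) * cf (1,1,0,2) + (1) * cf (1,1,1,1) + (-1) * cf (1,1,2,0) + (1) * cf (1,2,0,1) + (-1) * cf (1,2,1,0) + (-1) * cf (1,3,0,0) + (1) * cf (2,0,0,2) + (-1) * cf (2,0,1,1) + (1) * cf (2,0,2,0) + (-1) * cf (2,1,0,1) + (1) * cf (2,1,1,0) + (1) * cf (2,2,0,0) + (1) * cf (3,0,0,1) + (-1) * cf (3,0,1,0) + (-1) * cf (3,1,0,0) + (1) * cf (4,0,0,0)] ! i"])
    apply (intro allI)
    apply (subst cf)
    apply (simp only: PY_def nth_Cons_numeral nth_Cons_0 numeral_One)
    apply (simp)
    by algebra
qed

definition crit :: "(nat \<Rightarrow> real) \<Rightarrow> real \<Rightarrow> real \<Rightarrow> real \<Rightarrow> real \<Rightarrow> bool" where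
  "crit k m a b c \<longleftrightarrow> PYm k m a b c = 0 \<and> PYa k m a b c = 0 \<and> PYb k m a b c = 0 \<and> PYc k m a b c = 0"


lemma critDm: "crit k m a b c \<Longrightarrow> PYm k m a b c = 0" by (simp add: crit_def)
lemma critDa: "crit k m a b c \<Longrightarrow> PYa k m a b c = 0" by (simp add: crit_def)
lemma critDb: "crit k m a b c \<Longrightarrow> PYb k m a b c = 0" by (simp add: crit_def)
lemma critDc: "crit k m a b c \<Longrightarrow> PYc k m a b c = 0" by (simp add: crit_def)

lemma linalg:
  fixes d :: "nat \<Rightarrow> real" and mu nu al be :: real
  assumes mu: "mu \<noteq> 0" and nu: "nu \<noteq> 0" and be: "be \<noteq> 0" and d0: "d 0 = 0"
    and P0: "crit d mu nu 0 0"
    and P1: "crit d mu (-nu) 0 0"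
    and P2: "crit d mu 0 nu 0"
    and P3: "crit d mu 0 (-nu) 0"
    and P4: "crit d mu 0 0 nu"
    and P5: "crit d mu 0 0 (-nu)"
    and P6: "crit d al be be be"
    and P7: "crit d al be (-be) (-be)"
    and P8: "crit d al (-be) be (-be)"
    and P9: "crit d al (-be) (-be) be"
  shows "PY d m a b c = 0"
proof -
  have E0_m: "d 0 * ((4)*mu^3) + d 1 * ((3)*mu^2*nu) + d 4 * ((2)*mu*nu^2) + d 10 * ((1)*nu^3) = 0" using critDm[OF P0] unfolding PYm_def by (simp add: algebra_simps power2_eq_square power3_eq_cube)
  have E0_a: "d 1 * ((1)*mu^3) + d 4 * ((2)*mu^2*nu) + d 10 * ((3)*mu*nu^2) + d 20 * ((4)*nu^3) = 0" using critDa[OF P0] unfolding PYa_def by (simp add: algebra_simps power2_eq_square power3_eq_cube)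
  have E0_b: "d 2 * ((1)*mu^3) + d 5 * ((1)*mu^2*nu) + d 11 * ((1)*mu*nu^2) + d 21 * ((1)*nu^3) = 0" using critDb[OF P0] unfolding PYb_def by (simp add: algebra_simps power2_eq_square power3_eq_cube)
  have E0_c: "d 3 * ((1)*mu^3) + d 6 * ((1)*mu^2*nu) + d 12 * ((1)*mu*nu^2) + d 22 * ((1)*nu^3) = 0" using critDc[OF P0] unfolding PYc_def by (simp add: algebra_simps power2_eq_square power3_eq_cube)
  have E1_m: "d 0 * ((4)*mu^3) + d 1 * ((-3)*mu^2*nu) + d 4 * ((2)*mu*nu^2) + d 10 * ((-1)*nu^3) = 0" using critDm[OF P1] unfolding PYm_def by (simp add: algebra_simps power2_eq_square power3_eq_cube)
  have E1_a: "d 1 * ((1)*mu^3) + d 4 * ((-2)*mu^2*nu) + d 10 * ((3)*mu*nu^2) + d 20 * ((-4)*nu^3) = 0" using critDa[OF P1] unfolding PYa_def by (simp add: algebra_simps power2_eq_square power3_eq_cube)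
  have E1_b: "d 2 * ((1)*mu^3) + d 5 * ((-1)*mu^2*nu) + d 11 * ((1)*mu*nu^2) + d 21 * ((-1)*nu^3) = 0" using critDb[OF P1] unfolding PYb_def by (simp add: algebra_simps power2_eq_square power3_eq_cube)
  have E1_c: "d 3 * ((1)*mu^3) + d 6 * ((-1)*mu^2*nu) + d 12 * ((1)*mu*nu^2) + d 22 * ((-1)*nu^3) = 0" using critDc[OF P1] unfolding PYc_def by (simp add: algebra_simps power2_eq_square power3_eq_cube)
  have E2_m: "d 0 * ((4)*mu^3) + d 2 * ((3)*mu^2*nu) + d 7 * ((2)*mu*nu^2) + d 16 * ((1)*nu^3) = 0" using critDm[OF P2] unfolding PYm_def by (simp add: algebra_simps power2_eq_square power3_eq_cube)
  have E2_a: "d 1 * ((1)*mu^3) + d 5 * ((1)*mu^2*nu) + d 13 * ((1)*mu*nu^2) + d 26 * ((1)*nu^3) = 0" using critDa[OF P2] unfolding PYa_def by (simp add: algebra_simps power2_eq_square power3_eq_cube)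
  have E2_b: "d 2 * ((1)*mu^3) + d 7 * ((2)*mu^2*nu) + d 16 * ((3)*mu*nu^2) + d 30 * ((4)*nu^3) = 0" using critDb[OF P2] unfolding PYb_def by (simp add: algebra_simps power2_eq_square power3_eq_cube)
  have E2_c: "d 3 * ((1)*mu^3) + d 8 * ((1)*mu^2*nu) + d 17 * ((1)*mu*nu^2) + d 31 * ((1)*nu^3) = 0" using critDc[OF P2] unfolding PYc_def by (simp add: algebra_simps power2_eq_square power3_eq_cube)
  have E3_m: "d 0 * ((4)*mu^3) + d 2 * ((-3)*mu^2*nu) + d 7 * ((2)*mu*nu^2) + d 16 * ((-1)*nu^3) = 0" using critDm[OF P3] unfolding PYm_def by (simp add: algebra_simps power2_eq_square power3_eq_cube)
  have E3_a: "d 1 * ((1)*mu^3) + d 5 * ((-1)*mu^2*nu) + d 13 * ((1)*mu*nu^2) + d 26 * ((-1)*nu^3) = 0" using critDa[OF P3] unfolding PYa_def by (simp add: algebra_simps power2_eq_square power3_eq_cube)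
  have E3_b: "d 2 * ((1)*mu^3) + d 7 * ((-2)*mu^2*nu) + d 16 * ((3)*mu*nu^2) + d 30 * ((-4)*nu^3) = 0" using critDb[OF P3] unfolding PYb_def by (simp add: algebra_simps power2_eq_square power3_eq_cube)
  have E3_c: "d 3 * ((1)*mu^3) + d 8 * ((-1)*mu^2*nu) + d 17 * ((1)*mu*nu^2) + d 31 * ((-1)*nu^3) = 0" using critDc[OF P3] unfolding PYc_def by (simp add: algebra_simps power2_eq_square power3_eq_cube)
  have E4_m: "d 0 * ((4)*mu^3) + d 3 * ((3)*mu^2*nu) + d 9 * ((2)*mu*nu^2) + d 19 * ((1)*nu^3) = 0" using critDm[OF P4] unfolding PYm_def by (simp add: algebra_simps power2_eq_square power3_eq_cube)
  have E4_a: "d 1 * ((1)*mu^3) + d 6 * ((1)*mu^2*nu) + d 15 * ((1)*mu*nu^2) + d 29 * ((1)*nu^3) = 0" using critDa[OF P4] unfolding PYa_def by (simp add: algebra_simps power2_eq_square power3_eq_cube)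
  have E4_b: "d 2 * ((1)*mu^3) + d 8 * ((1)*mu^2*nu) + d 18 * ((1)*mu*nu^2) + d 33 * ((1)*nu^3) = 0" using critDb[OF P4] unfolding PYb_def by (simp add: algebra_simps power2_eq_square power3_eq_cube)
  have E4_c: "d 3 * ((1)*mu^3) + d 9 * ((2)*mu^2*nu) + d 19 * ((3)*mu*nu^2) + d 34 * ((4)*nu^3) = 0" using critDc[OF P4] unfolding PYc_def by (simp add: algebra_simps power2_eq_square power3_eq_cube)
  have E5_m: "d 0 * ((4)*mu^3) + d 3 * ((-3)*mu^2*nu) + d 9 * ((2)*mu*nu^2) + d 19 * ((-1)*nu^3) = 0" using critDm[OF P5] unfolding PYm_def by (simp add: algebra_simps power2_eq_square power3_eq_cube)
  have E5_a: "d 1 * ((1)*mu^3) + d 6 * ((-1)*mu^2*nu) + d 15 * ((1)*mu*nu^2) + d 29 * ((-1)*nu^3) = 0" using critDa[OF P5] unfolding PYa_def by (simp add: algebra_simps power2_eq_square power3_eq_cube)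
  have E5_b: "d 2 * ((1)*mu^3) + d 8 * ((-1)*mu^2*nu) + d 18 * ((1)*mu*nu^2) + d 33 * ((-1)*nu^3) = 0" using critDb[OF P5] unfolding PYb_def by (simp add: algebra_simps power2_eq_square power3_eq_cube)
  have E5_c: "d 3 * ((1)*mu^3) + d 9 * ((-2)*mu^2*nu) + d 19 * ((3)*mu*nu^2) + d 34 * ((-4)*nu^3) = 0" using critDc[OF P5] unfolding PYc_def by (simp add: algebra_simps power2_eq_square power3_eq_cube)
  have E6_m: "d 0 * ((4)*al^3) + d 1 * ((3)*al^2*be) + d 2 * ((3)*al^2*be) + d 3 * ((3)*al^2*be) + d 4 * ((2)*al*be^2) + d 5 * ((2)*al*be^2) + d 6 * ((2)*al*be^2) + d 7 * ((2)*al*be^2) + d 8 * ((2)*al*be^2) + d 9 * ((2)*al*be^2) + d 10 * ((1)*be^3) + d 11 * ((1)*be^3) + d 12 * ((1)*be^3) + d 13 * ((1)*be^3) + d 14 * ((1)*be^3) + d 15 * ((1)*be^3) + d 16 * ((1)*be^3) + d 17 * ((1)*be^3) + d 18 * ((1)*be^3) + d 19 * ((1)*be^3) = 0" using critDm[OF P6] unfolding PYm_def by (simp add: algebra_simps power2_eq_square power3_eq_cube)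
  have E6_a: "d 1 * ((1)*al^3) + d 4 * ((2)*al^2*be) + d 5 * ((1)*al^2*be) + d 6 * ((1)*al^2*be) + d 10 * ((3)*al*be^2) + d 11 * ((2)*al*be^2) + d 12 * ((2)*al*be^2) + d 13 * ((1)*al*be^2) + d 14 * ((1)*al*be^2) + d 15 * ((1)*al*be^2) + d 20 * ((4)*be^3) + d 21 * ((3)*be^3) + d 22 * ((3)*be^3) + d 23 * ((2)*be^3) + d 24 * ((2)*be^3) + d 25 * ((2)*be^3) + d 26 * ((1)*be^3) + d 27 * ((1)*be^3) + d 28 * ((1)*be^3) + d 29 * ((1)*be^3) = 0" using critDa[OF P6] unfolding PYa_def by (simp add: algebra_simps power2_eq_square power3_eq_cube)
  have E6_b: "d 2 * ((1)*al^3) + d 5 * ((1)*al^2*be) + d 7 * ((2)*al^2*be) + d 8 * ((1)*al^2*be) + d 11 * ((1)*al*be^2) + d 13 * ((2)*al*be^2) + d 14 * ((1)*al*be^2) + d 16 * ((3)*al*be^2) + d 17 * ((2)*al*be^2) + d 18 * ((1)*al*be^2) + d 21 * ((1)*be^3) + d 23 * ((2)*be^3) + d 24 * ((1)*be^3) + d 26 * ((3)*be^3) + d 27 * ((2)*be^3) + d 28 * ((1)*be^3) + d 30 * ((4)*be^3) + d 31 * ((3)*be^3) + d 32 * ((2)*be^3) + d 33 * ((1)*be^3) = 0" using critDb[OF P6] unfolding PYb_def by (simp add: algebra_simps power2_eq_square power3_eq_cube)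
  have E6_c: "d 3 * ((1)*al^3) + d 6 * ((1)*al^2*be) + d 8 * ((1)*al^2*be) + d 9 * ((2)*al^2*be) + d 12 * ((1)*al*be^2) + d 14 * ((1)*al*be^2) + d 15 * ((2)*al*be^2) + d 17 * ((1)*al*be^2) + d 18 * ((2)*al*be^2) + d 19 * ((3)*al*be^2) + d 22 * ((1)*be^3) + d 24 * ((1)*be^3) + d 25 * ((2)*be^3) + d 27 * ((1)*be^3) + d 28 * ((2)*be^3) + d 29 * ((3)*be^3) + d 31 * ((1)*be^3) + d 32 * ((2)*be^3) + d 33 * ((3)*be^3) + d 34 * ((4)*be^3) = 0" using critDc[OF P6] unfolding PYc_def by (simp add: algebra_simps power2_eq_square power3_eq_cube)
  have E7_m: "d 0 * ((4)*al^3) + d 1 * ((3)*al^2*be) + d 2 * ((-3)*al^2*be) + d 3 * ((-3)*al^2*be) + d 4 * ((2)*al*be^2) + d 5 * ((-2)*al*be^2) + d 6 * ((-2)*al*be^2) + d 7 * ((2)*al*be^2) + d 8 * ((2)*al*be^2) + d 9 * ((2)*al*be^2) + d 10 * ((1)*be^3) + d 11 * ((-1)*be^3) + d 12 * ((-1)*be^3) + d 13 * ((1)*be^3) + d 14 * ((1)*be^3) + d 15 * ((1)*be^3) + d 16 * ((-1)*be^3) + d 17 * ((-1)*be^3) + d 18 * ((-1)*be^3) + d 19 * ((-1)*be^3) = 0" using critDm[OF P7] unfolding PYm_def by (simp add: algebra_simps power2_eq_square power3_eq_cube)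
  have E7_a: "d 1 * ((1)*al^3) + d 4 * ((2)*al^2*be) + d 5 * ((-1)*al^2*be) + d 6 * ((-1)*al^2*be) + d 10 * ((3)*al*be^2) + d 11 * ((-2)*al*be^2) + d 12 * ((-2)*al*be^2) + d 13 * ((1)*al*be^2) + d 14 * ((1)*al*be^2) + d 15 * ((1)*al*be^2) + d 20 * ((4)*be^3) + d 21 * ((-3)*be^3) + d 22 * ((-3)*be^3) + d 23 * ((2)*be^3) + d 24 * ((2)*be^3) + d 25 * ((2)*be^3) + d 26 * ((-1)*be^3) + d 27 * ((-1)*be^3) + d 28 * ((-1)*be^3) + d 29 * ((-1)*be^3) = 0" using critDa[OF P7] unfolding PYa_def by (simp add: algebra_simps power2_eq_square power3_eq_cube)
  have E7_b: "d 2 * ((1)*al^3) + d 5 * ((1)*al^2*be) + d 7 * ((-2)*al^2*be) + d 8 * ((-1)*al^2*be) + d 11 * ((1)*al*be^2) + d 13 * ((-2)*al*be^2) + d 14 * ((-1)*al*be^2) + d 16 * ((3)*al*be^2) + d 17 * ((2)*al*be^2) + d 18 * ((1)*al*be^2) + d 21 * ((1)*be^3) + d 23 * ((-2)*be^3) + d 24 * ((-1)*be^3) + d 26 * ((3)*be^3) + d 27 * ((2)*be^3) + d 28 * ((1)*be^3) + d 30 * ((-4)*be^3) + d 31 * ((-3)*be^3) + d 32 * ((-2)*be^3) + d 33 * ((-1)*be^3) = 0" using critDb[OF P7] unfolding PYb_def by (simp add: algebra_simps power2_eq_square power3_eq_cube)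
  have E7_c: "d 3 * ((1)*al^3) + d 6 * ((1)*al^2*be) + d 8 * ((-1)*al^2*be) + d 9 * ((-2)*al^2*be) + d 12 * ((1)*al*be^2) + d 14 * ((-1)*al*be^2) + d 15 * ((-2)*al*be^2) + d 17 * ((1)*al*be^2) + d 18 * ((2)*al*be^2) + d 19 * ((3)*al*be^2) + d 22 * ((1)*be^3) + d 24 * ((-1)*be^3) + d 25 * ((-2)*be^3) + d 27 * ((1)*be^3) + d 28 * ((2)*be^3) + d 29 * ((3)*be^3) + d 31 * ((-1)*be^3) + d 32 * ((-2)*be^3) + d 33 * ((-3)*be^3) + d 34 * ((-4)*be^3) = 0" using critDc[OF P7] unfolding PYc_def by (simp add: algebra_simps power2_eq_square power3_eq_cube)
  have E8_m: "d 0 * ((4)*al^3) + d 1 * ((-3)*al^2*be) + d 2 * ((3)*al^2*be) + d 3 * ((-3)*al^2*be) + d 4 * ((2)*al*be^2) + d 5 * ((-2)*al*be^2) + d 6 * ((2)*al*be^2) + d 7 * ((2)*al*be^2) + d 8 * ((-2)*al*be^2) + d 9 * ((2)*al*be^2) + d 10 * ((-1)*be^3) + d 11 * ((1)*be^3) + d 12 * ((-1)*be^3) + d 13 * ((-1)*be^3) + d 14 * ((1)*be^3) + d 15 * ((-1)*be^3) + d 16 * ((1)*be^3) + d 17 * ((-1)*be^3) + d 18 * ((1)*be^3) + d 19 * ((-1)*be^3) = 0" using critDm[OF P8] unfolding PYm_def by (simp add: algebra_simps power2_eq_square power3_eq_cube)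
  have E8_a: "d 1 * ((1)*al^3) + d 4 * ((-2)*al^2*be) + d 5 * ((1)*al^2*be) + d 6 * ((-1)*al^2*be) + d 10 * ((3)*al*be^2) + d 11 * ((-2)*al*be^2) + d 12 * ((2)*al*be^2) + d 13 * ((1)*al*be^2) + d 14 * ((-1)*al*be^2) + d 15 * ((1)*al*be^2) + d 20 * ((-4)*be^3) + d 21 * ((3)*be^3) + d 22 * ((-3)*be^3) + d 23 * ((-2)*be^3) + d 24 * ((2)*be^3) + d 25 * ((-2)*be^3) + d 26 * ((1)*be^3) + d 27 * ((-1)*be^3) + d 28 * ((1)*be^3) + d 29 * ((-1)*be^3) = 0" using critDa[OF P8] unfolding PYa_def by (simp add: algebra_simps power2_eq_square power3_eq_cube)
  have E8_b: "d 2 * ((1)*al^3) + d 5 * ((-1)*al^2*be) + d 7 * ((2)*al^2*be) + d 8 * ((-1)*al^2*be) + d 11 * ((1)*al*be^2) + d 13 * ((-2)*al*be^2) + d 14 * ((1)*al*be^2) + d 16 * ((3)*al*be^2) + d 17 * ((-2)*al*be^2) + d 18 * ((1)*al*be^2) + d 21 * ((-1)*be^3) + d 23 * ((2)*be^3) + d 24 * ((-1)*be^3) + d 26 * ((-3)*be^3) + d 27 * ((2)*be^3) + d 28 * ((-1)*be^3) + d 30 * ((4)*be^3) + d 31 * ((-3)*be^3) + d 32 * ((2)*be^3) + d 33 * ((-1)*be^3) = 0" using critDb[OF P8] unfolding PYb_def by (simp add: algebra_simps power2_eq_square power3_eq_cube)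
  have E8_c: "d 3 * ((1)*al^3) + d 6 * ((-1)*al^2*be) + d 8 * ((1)*al^2*be) + d 9 * ((-2)*al^2*be) + d 12 * ((1)*al*be^2) + d 14 * ((-1)*al*be^2) + d 15 * ((2)*al*be^2) + d 17 * ((1)*al*be^2) + d 18 * ((-2)*al*be^2) + d 19 * ((3)*al*be^2) + d 22 * ((-1)*be^3) + d 24 * ((1)*be^3) + d 25 * ((-2)*be^3) + d 27 * ((-1)*be^3) + d 28 * ((2)*be^3) + d 29 * ((-3)*be^3) + d 31 * ((1)*be^3) + d 32 * ((-2)*be^3) + d 33 * ((3)*be^3) + d 34 * ((-4)*be^3) = 0" using critDc[OF P8] unfolding PYc_def by (simp add: algebra_simps power2_eq_square power3_eq_cube)
  have E9_m: "d 0 * ((4)*al^3) + d 1 * ((-3)*al^2*be) + d 2 * ((-3)*al^2*be) + d 3 * ((3)*al^2*be) + d 4 * ((2)*al*be^2) + d 5 * ((2)*al*be^2) + d 6 * ((-2)*al*be^2) + d 7 * ((2)*al*be^2) + d 8 * ((-2)*al*be^2) + d 9 * ((2)*al*be^2) + d 10 * ((-1)*be^3) + d 11 * ((-1)*be^3) + d 12 * ((1)*be^3) + d 13 * ((-1)*be^3) + d 14 * ((1)*be^3) + d 15 * ((-1)*be^3) + d 16 * ((-1)*be^3) + d 17 * ((1)*be^3) + d 18 * ((-1)*be^3) + d 19 * ((1)*be^3) = 0" using critDm[OF P9] unfolding PYm_def by (simp add: algebra_simps power2_eq_square power3_eq_cube)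
  have E9_a: "d 1 * ((1)*al^3) + d 4 * ((-2)*al^2*be) + d 5 * ((-1)*al^2*be) + d 6 * ((1)*al^2*be) + d 10 * ((3)*al*be^2) + d 11 * ((2)*al*be^2) + d 12 * ((-2)*al*be^2) + d 13 * ((1)*al*be^2) + d 14 * ((-1)*al*be^2) + d 15 * ((1)*al*be^2) + d 20 * ((-4)*be^3) + d 21 * ((-3)*be^3) + d 22 * ((3)*be^3) + d 23 * ((-2)*be^3) + d 24 * ((2)*be^3) + d 25 * ((-2)*be^3) + d 26 * ((-1)*be^3) + d 27 * ((1)*be^3) + d 28 * ((-1)*be^3) + d 29 * ((1)*be^3) = 0" using critDa[OF P9] unfolding PYa_def by (simp add: algebra_simps power2_eq_square power3_eq_cube)
  have E9_b: "d 2 * ((1)*al^3) + d 5 * ((-1)*al^2*be) + d 7 * ((-2)*al^2*be) + d 8 * ((1)*al^2*be) + d 11 * ((1)*al*be^2) + d 13 * ((2)*al*be^2) + d 14 * ((-1)*al*be^2) + d 16 * ((3)*al*be^2) + d 17 * ((-2)*al*be^2) + d 18 * ((1)*al*be^2) + d 21 * ((-1)*be^3) + d 23 * ((-2)*be^3) + d 24 * ((1)*be^3) + d 26 * ((-3)*be^3) + d 27 * ((2)*be^3) + d 28 * ((-1)*be^3) + d 30 * ((-4)*be^3) + d 31 * ((3)*be^3) + d 32 * ((-2)*be^3) + d 33 * ((1)*be^3) = 0" using critDb[OF P9] unfolding PYb_def by (simp add: algebra_simps power2_eq_square power3_eq_cube)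
  have E9_c: "d 3 * ((1)*al^3) + d 6 * ((-1)*al^2*be) + d 8 * ((-1)*al^2*be) + d 9 * ((2)*al^2*be) + d 12 * ((1)*al*be^2) + d 14 * ((1)*al*be^2) + d 15 * ((-2)*al*be^2) + d 17 * ((1)*al*be^2) + d 18 * ((-2)*al*be^2) + d 19 * ((3)*al*be^2) + d 22 * ((-1)*be^3) + d 24 * ((-1)*be^3) + d 25 * ((2)*be^3) + d 27 * ((-1)*be^3) + d 28 * ((2)*be^3) + d 29 * ((-3)*be^3) + d 31 * ((-1)*be^3) + d 32 * ((2)*be^3) + d 33 * ((-3)*be^3) + d 34 * ((4)*be^3) = 0" using critDc[OF P9] unfolding PYc_def by (simp add: algebra_simps power2_eq_square power3_eq_cube)
  have "mu*nu^2*d 4 = 0" using E0_m E1_m d0 by algebra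
  then have z4: "d 4 = 0" using mu nu by simp
  have "nu*(3*mu^2*d 1 + nu^2*d 10) = 0" using E0_m E1_m by algebra
  then have r1: "3*mu^2*d 1 + nu^2*d 10 = 0" using nu by simp
  have "mu*(mu^2*d 1 + 3*nu^2*d 10) = 0" using E0_a E1_a by algebra
  then have r2: "mu^2*d 1 + 3*nu^2*d 10 = 0" using mu by simp
  have "nu^2*d 10 = 0" using r1 r2 by algebra
  then have z10: "d 10 = 0" using nu by simp
  have "mu^2*d 1 = 0" using r1 z10 by algebra
  then have z1: "d 1 = 0" using mu by simp
  have "nu^3*d 20 = 0" using E0_a E1_a z4 by algebra
  then have z20: "d 20 = 0" using nu by simp
  have "mu*nu^2*d 7 = 0" using E2_m E3_m d0 by algebra
  then have z7: "d 7 = 0" using mu nu by simp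
  have "nu*(3*mu^2*d 2 + nu^2*d 16) = 0" using E2_m E3_m by algebra
  then have r1: "3*mu^2*d 2 + nu^2*d 16 = 0" using nu by simp
  have "mu*(mu^2*d 2 + 3*nu^2*d 16) = 0" using E2_b E3_b by algebra
  then have r2: "mu^2*d 2 + 3*nu^2*d 16 = 0" using mu by simp
  have "nu^2*d 16 = 0" using r1 r2 by algebra
  then have z16: "d 16 = 0" using nu by simp
  have "mu^2*d 2 = 0" using r1 z16 by algebra
  then have z2: "d 2 = 0" using mu by simp
  have "nu^3*d 30 = 0" using E2_b E3_b z7 by algebra
  then have z30: "d 30 = 0" using nu by simp
  have "mu*nu^2*d 9 = 0" using E4_m E5_m d0 by algebra
  then have z9: "d 9 = 0" using mu nu by simp
  have "nu*(3*mu^2*d 3 + nu^2*d 19) = 0" using E4_m E5_m by algebra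
  then have r1: "3*mu^2*d 3 + nu^2*d 19 = 0" using nu by simp
  have "mu*(mu^2*d 3 + 3*nu^2*d 19) = 0" using E4_c E5_c by algebra
  then have r2: "mu^2*d 3 + 3*nu^2*d 19 = 0" using mu by simp
  have "nu^2*d 19 = 0" using r1 r2 by algebra
  then have z19: "d 19 = 0" using nu by simp
  have "mu^2*d 3 = 0" using r1 z19 by algebra
  then have z3: "d 3 = 0" using mu by simp
  have "nu^3*d 34 = 0" using E4_c E5_c z9 by algebra
  then have z34: "d 34 = 0" using nu by simp
  have "mu*nu^2*d 11 = 0" using E0_b E1_b z2 by algebra
  then have z11: "d 11 = 0" using mu nu by simp
  have "nu*(mu^2*d 5 + nu^2*d 21) = 0" using E0_b E1_b by algebra
  then have R21: "mu^2*d 5 + nu^2*d 21 = 0" using nu by simp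
  have "mu*nu^2*d 12 = 0" using E0_c E1_c z3 by algebra
  then have z12: "d 12 = 0" using mu nu by simp
  have "nu*(mu^2*d 6 + nu^2*d 22) = 0" using E0_c E1_c by algebra
  then have R22: "mu^2*d 6 + nu^2*d 22 = 0" using nu by simp
  have "mu*nu^2*d 13 = 0" using E2_a E3_a z1 by algebra
  then have z13: "d 13 = 0" using mu nu by simp
  have "nu*(mu^2*d 5 + nu^2*d 26) = 0" using E2_a E3_a by algebra
  then have R26: "mu^2*d 5 + nu^2*d 26 = 0" using nu by simp
  have "mu*nu^2*d 17 = 0" using E2_c E3_c z3 by algebra
  then have z17: "d 17 = 0" using mu nu by simp
  have "nu*(mu^2*d 8 + nu^2*d 31) = 0" using E2_c E3_c by algebra
  then have R31: "mu^2*d 8 + nu^2*d 31 = 0" using nu by simp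
  have "mu*nu^2*d 15 = 0" using E4_a E5_a z1 by algebra
  then have z15: "d 15 = 0" using mu nu by simp
  have "nu*(mu^2*d 6 + nu^2*d 29) = 0" using E4_a E5_a by algebra
  then have R29: "mu^2*d 6 + nu^2*d 29 = 0" using nu by simp
  have "mu*nu^2*d 18 = 0" using E4_b E5_b z2 by algebra
  then have z18: "d 18 = 0" using mu nu by simp
  have "nu*(mu^2*d 8 + nu^2*d 33) = 0" using E4_b E5_b by algebra
  then have R33: "mu^2*d 8 + nu^2*d 33 = 0" using nu by simp
  note Z = d0 z1 z4 z10 z20 z2 z7 z16 z30 z3 z9 z19 z34 z11 z12 z13 z17 z15 z18
  have "be^3*d 14 = 0" using E6_m E7_m E8_m E9_m Z by algebra
  then have z14: "d 14 = 0" using be by simp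
  have "be^3*d 24 = 0" using E6_a E7_a E8_a E9_a Z z14 by algebra
  then have z24: "d 24 = 0" using be by simp
  have "be^3*d 27 = 0" using E6_b E7_b E8_b E9_b Z z14 by algebra
  then have z27: "d 27 = 0" using be by simp
  have "be^3*d 28 = 0" using E6_c E7_c E8_c E9_c Z z14 by algebra
  then have z28: "d 28 = 0" using be by simp
  note Z = d0 z1 z4 z10 z20 z2 z7 z16 z30 z3 z9 z19 z34 z11 z12 z13 z17 z15 z18 z14 z24 z27 z28
  have "be^3*(d 23 + d 25) = 0" using E6_a E7_a E8_a E9_a Z by algebra
  then have q1: "d 23 + d 25 = 0" using be by simp
  have "be^3*(d 23 + d 32) = 0" using E6_b E7_b E8_b E9_b Z by algebra
  then have q2: "d 23 + d 32 = 0" using be by simp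
  have "be^3*(d 25 + d 32) = 0" using E6_c E7_c E8_c E9_c Z by algebra
  then have q3: "d 25 + d 32 = 0" using be by simp
  have z23: "d 23 = 0" and z25: "d 25 = 0" and z32: "d 32 = 0" using q1 q2 q3 by linarith+
  note Z = d0 z1 z4 z10 z20 z2 z7 z16 z30 z3 z9 z19 z34 z11 z12 z13 z17 z15 z18 z14 z24 z27 z28 z23 z25 z32
  have "al*be^2*d 5 = 0" using E6_m E7_m E8_m E9_m Z by algebra
  then have "al*d 5 = 0" using be by simp
  then have al5: "al^2*d 5 = 0" by (simp add: power2_eq_square)
  have "be*(al^2*d 5 + be^2*(3*d 21 + d 26)) = 0" using E6_a E7_a E8_a E9_a Z by algebra
  then have w5: "al^2*d 5 + be^2*(3*d 21 + d 26) = 0" using be by simp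
  have "(al^2*nu^2 - 4*be^2*mu^2)*d 5 = 0" using w5 R21 R26 by algebra
  then have "4*be^2*mu^2*d 5 = 0" using al5 by algebra
  then have z5: "d 5 = 0" using be mu by simp
  have z21: "d 21 = 0" using R21 z5 nu by simp
  have z26: "d 26 = 0" using R26 z5 nu by simp
  have "al*be^2*d 6 = 0" using E6_m E7_m E8_m E9_m Z by algebra
  then have "al*d 6 = 0" using be by simp
  then have al6: "al^2*d 6 = 0" by (simp add: power2_eq_square)
  have "be*(al^2*d 6 + be^2*(3*d 22 + d 29)) = 0" using E6_a E7_a E8_a E9_a Z by algebra
  then have w6: "al^2*d 6 + be^2*(3*d 22 + d 29) = 0" using be by simp
  have "(al^2*nu^2 - 4*be^2*mu^2)*d 6 = 0" using w6 R22 R29 by algebra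
  then have "4*be^2*mu^2*d 6 = 0" using al6 by algebra
  then have z6: "d 6 = 0" using be mu by simp
  have z22: "d 22 = 0" using R22 z6 nu by simp
  have z29: "d 29 = 0" using R29 z6 nu by simp
  have "al*be^2*d 8 = 0" using E6_m E7_m E8_m E9_m Z by algebra
  then have "al*d 8 = 0" using be by simp
  then have al8: "al^2*d 8 = 0" by (simp add: power2_eq_square)
  have "be*(al^2*d 8 + be^2*(3*d 31 + d 33)) = 0" using E6_b E7_b E8_b E9_b Z by algebra
  then have w8: "al^2*d 8 + be^2*(3*d 31 + d 33) = 0" using be by simp
  have "(al^2*nu^2 - 4*be^2*mu^2)*d 8 = 0" using w8 R31 R33 by algebra
  then have "4*be^2*mu^2*d 8 = 0" using al8 by algebra
  then have z8: "d 8 = 0" using be mu by simp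
  have z31: "d 31 = 0" using R31 z8 nu by simp
  have z33: "d 33 = 0" using R33 z8 nu by simp
  note Z = d0 z1 z4 z10 z20 z2 z7 z16 z30 z3 z9 z19 z34 z11 z12 z13 z17 z15 z18 z14 z24 z27 z28 z23 z25 z32 z5 z21 z26 z6 z22 z29 z8 z31 z33
  show ?thesis unfolding PY_def using Z by simp
qed




definition EPc :: "real \<Rightarrow> real \<Rightarrow> real" where
  "EPc t w = -8*t^4*w^2 - 64*t^4*w - 96*t^4 + 32*t^3*w^2 + 128*t^3*w + 384*t^3 + 80*t^2*w^2 - 256*t^2*w - 576*t^2 + 288*t*w^2 + 384*t*w + 384*t + 120*w^2 - 192*w - 96"

definition GAc :: "real \<Rightarrow> real \<Rightarrow> real" where
  "GAc t w = -16*(t-1)*(t+3)*VF t w"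

definition hh :: "real \<Rightarrow> real \<Rightarrow> real \<Rightarrow> real \<Rightarrow> real \<Rightarrow> real \<Rightarrow> real" where
  "hh t w m a b c = 2*(t-1)^4*(w*m^2 - (w+4)*(a^2+b^2+c^2))^2 + EPc t w * (a^2*b^2+b^2*c^2+c^2*a^2) + GAc t w * m*(a*b*c)"

lemma had_poly:
  "pG0 t w * s0 (m+a+b+c) (m+a-b-c) (m-a+b-c) (m-a-b+c) + pG1 t w * s1 (m+a+b+c) (m+a-b-c) (m-a+b-c) (m-a-b+c)
   + pG2 t w * s2 (m+a+b+c) (m+a-b-c) (m-a+b-c) (m-a-b+c) + pG3 t w * s3 (m+a+b+c) (m+a-b-c) (m-a+b-c) (m-a-b+c)
   + pG4 t w * s4 (m+a+b+c) (m+a-b-c) (m-a+b-c) (m-a-b+c) = hh t w m a b c"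
  unfolding pG0_def pG1_def pG2_def pG3_def pG4_def s0_def s1_def s2_def s3_def s4_def T31_def T211_def hh_def EPc_def GAc_def VF_def
  by algebra

lemma g_had: "gG t u (m+a+b+c) (m+a-b-c) (m-a+b-c) (m-a-b+c) = u^2 * hh t (omega u) m a b c"
  unfolding gG_def had_poly[symmetric] by simp

lemma Hinv: "f a b c d = f (m+a'+b'+c') (m+a'-b'-c') (m-a'+b'-c') (m-a'-b'+c')"
  if "m = (a+b+c+d)/4" "a' = (a+b-c-d)/4" "b' = (a-b+c-d)/4" "c' = (a-b-c+d)/4" for f :: form4
proof -
  have "m+a'+b'+c' = a" "m+a'-b'-c' = b" "m-a'+b'-c' = c" "m-a'-b'+c' = d"
    using that by (simp_all add: field_simps)
  then show ?thesis by simp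
qed

lemma Gfac: "2*(t-1)^4*(w*m^2 - (w+4)*(3*r^2))^2 + EPc t w * (3*r^4) + GAc t w * m * r^3
   = ((t-1)*m - (t+3)*r)^2 * (2*w^2*((t-1)*m + (t+3)*r)^2 + 8*VF t w*r^2)"
  unfolding EPc_def GAc_def VF_def by algebra

lemma hh_psd:
  fixes t w m a b c :: real
  assumes vf: "VF t w \<ge> 0"
  shows "0 \<le> hh t w m a b c"
proof -
  define S where "S = a^2+b^2+c^2"
  define T where "T = a^2*b^2+b^2*c^2+c^2*a^2"
  define p where "p = a*b*c"
  define A where "A = 2*(t-1)^4*(w*m^2-(w+4)*S)^2"
  define EP where "EP = EPc t w"
  define GA where "GA = GAc t w"
  have hh: "hh t w m a b c = A + EP * T + GA * m * p"
    unfolding hh_def A_def S_def EP_def T_def GA_def p_def by simp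
  have A0: "A \<ge> 0" unfolding A_def by simp
  have S0: "S \<ge> 0" unfolding S_def by simp
  have T0: "T \<ge> 0" unfolding T_def by simp
  define \<rho> where "\<rho> = sqrt (S/3)"
  have r0: "\<rho> \<ge> 0" unfolding \<rho>_def using S0 by simp
  have Sr: "S = 3*\<rho>^2" unfolding \<rho>_def using S0 by simp
  have "S^2 - 3*T = ((a^2-b^2)^2 + (b^2-c^2)^2 + (c^2-a^2)^2)/2"
    unfolding S_def T_def by algebra
  also have "\<dots> \<ge> 0" by simp
  finally have T1: "T \<le> 3*\<rho>^4" using Sr by (simp add: power_mult_distrib)
  have "T^2 - 3*p^2*S = ((a^2*b^2-b^2*c^2)^2 + (b^2*c^2-c^2*a^2)^2 + (c^2*a^2-a^2*b^2)^2)/2"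
    unfolding S_def T_def p_def by algebra
  also have "\<dots> \<ge> 0" by simp
  finally have "(3*\<bar>p\<bar>*\<rho>)^2 \<le> T^2" using Sr by (simp add: power_mult_distrib)
  then have T2: "3*\<bar>p\<bar>*\<rho> \<le> T" using T0 by (rule power2_le_imp_le)
  have L: "0 \<le> A + 3*EP*\<rho>^4 - \<bar>GA*m\<bar>*\<rho>^3"
  proof (cases "GA*m \<ge> 0")
    case True
    have "A + 3*EP*\<rho>^4 - \<bar>GA*m\<bar>*\<rho>^3 = ((t-1)*m - (t+3)*(-\<rho>))^2 * (2*w^2*((t-1)*m + (t+3)*(-\<rho>))^2 + 8*VF t w*(-\<rho>)^2)"
      using Gfac[of t w m "-\<rho>"] True unfolding A_def Sr EP_def GA_def by (simp add: power_mult_distrib)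
    also have "\<dots> \<ge> 0" using vf by simp
    finally show ?thesis .
  next
    case False
    have "A + 3*EP*\<rho>^4 - \<bar>GA*m\<bar>*\<rho>^3 = ((t-1)*m - (t+3)*\<rho>)^2 * (2*w^2*((t-1)*m + (t+3)*\<rho>)^2 + 8*VF t w*\<rho>^2)"
      using Gfac[of t w m "\<rho>"] False unfolding A_def Sr EP_def GA_def by (simp add: power_mult_distrib)
    also have "\<dots> \<ge> 0" using vf by simp
    finally show ?thesis .
  qed
  have "\<bar>GA * m * p * (3*\<rho>^4)\<bar> = (\<bar>GA*m\<bar> * \<rho>^3) * (3*\<bar>p\<bar>*\<rho>)"
    using r0 by (simp add: abs_mult power_abs algebra_simps power3_eq_cube power4_eq_xxxx)
  also have "\<dots> \<le> (\<bar>GA*m\<bar> * \<rho>^3) * T"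
    by (rule mult_left_mono[OF T2]) (use r0 in simp)
  finally have key: "GA * m * p * (3*\<rho>^4) \<ge> - (\<bar>GA*m\<bar> * \<rho>^3 * T)" by linarith
  have id1: "(3*\<rho>^4 - T)*A + T*(A + 3*EP*\<rho>^4 - \<bar>GA*m\<bar>*\<rho>^3) = 3*\<rho>^4*A + 3*\<rho>^4*EP*T - \<bar>GA*m\<bar>*\<rho>^3*T"
    by (simp add: algebra_simps)
  have id2: "3*\<rho>^4*(A + EP * T + GA * m * p) = 3*\<rho>^4*A + 3*\<rho>^4*EP*T + GA * m * p * (3*\<rho>^4)"
    by (simp add: algebra_simps)
  have nn: "0 \<le> (3*\<rho>^4 - T)*A + T*(A + 3*EP*\<rho>^4 - \<bar>GA*m\<bar>*\<rho>^3)"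
    using T1 A0 T0 L by simp
  have main: "0 \<le> 3*\<rho>^4*(A + EP * T + GA * m * p)"
    using id1 id2 nn key by linarith
  show ?thesis
  proof (cases "\<rho> = 0")
    case True
    then have "S = 0" using Sr by simp
    then have "a = 0" "b = 0" "c = 0" unfolding S_def by (auto simp: add_nonneg_eq_0_iff)
    then have "T = 0" "p = 0" by (simp_all add: T_def p_def)
    then show ?thesis using A0 hh by simp
  next
    case False
    then have "0 < 3*\<rho>^4" using r0 by simp
    then show ?thesis using main hh by (simp add: zero_le_mult_iff)
  qed
qed




lemma PY_dm: "((\<lambda>e. PY k (m+e) a b c) has_real_derivative PYm k m a b c) (at 0)"
  unfolding PY_def PYm_def
  by (auto intro!: derivative_eq_intros simp: algebra_simps power2_eq_square power3_eq_cube)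
lemma PY_da: "((\<lambda>e. PY k m (a+e) b c) has_real_derivative PYa k m a b c) (at 0)"
  unfolding PY_def PYa_def
  by (auto intro!: derivative_eq_intros simp: algebra_simps power2_eq_square power3_eq_cube)
lemma PY_db: "((\<lambda>e. PY k m a (b+e) c) has_real_derivative PYb k m a b c) (at 0)"
  unfolding PY_def PYb_def
  by (auto intro!: derivative_eq_intros simp: algebra_simps power2_eq_square power3_eq_cube)
lemma PY_dc: "((\<lambda>e. PY k m a b (c+e)) has_real_derivative PYc k m a b c) (at 0)"
  unfolding PY_def PYc_def
  by (auto intro!: derivative_eq_intros simp: algebra_simps power2_eq_square power3_eq_cube)

lemma min_grad:
  assumes nn: "\<And>m a b c. 0 \<le> PY k m a b c" and z: "PY k m a b c = 0"
  shows "crit k m a b c"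
proof -
  have "PYm k m a b c = 0"
    by (rule DERIV_local_min[OF PY_dm, of 1]) (use nn z in auto)
  moreover have "PYa k m a b c = 0"
    by (rule DERIV_local_min[OF PY_da, of 1]) (use nn z in auto)
  moreover have "PYb k m a b c = 0"
    by (rule DERIV_local_min[OF PY_db, of 1]) (use nn z in auto)
  moreover have "PYc k m a b c = 0"
    by (rule DERIV_local_min[OF PY_dc, of 1]) (use nn z in auto)
  ultimately show ?thesis unfolding crit_def by blast
qed


definition gcoef :: "real \<Rightarrow> real \<Rightarrow> nat \<times> nat \<times> nat \<times> nat \<Rightarrow> real" where
  "gcoef t u = (\<lambda>(i,j,k,l). u^2 * (if i*i+j*j+k*k+l*l = 16 then pG0 t (omega u)
      else if i*i+j*j+k*k+l*l = 10 then pG1 t (omega u)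
      else if i*i+j*j+k*k+l*l = 8 then pG2 t (omega u)
      else if i*i+j*j+k*k+l*l = 6 then pG3 t (omega u)
      else pG4 t (omega u) - 4*pG0 t (omega u) - 12*pG1 t (omega u) - 6*pG2 t (omega u) - 12*pG3 t (omega u)))"

lemma g_qf: "quartic_form (gG t u)"
  unfolding quartic_form_def
proof (rule exI[of _ "gcoef t u"], intro allI)
  fix a b c d
  show "gG t u a b c d = (\<Sum>(i,j,k,l)\<in>exps4. gcoef t u (i,j,k,l) * a ^ i * b ^ j * c ^ k * d ^ l)"
    apply (simp add: exps4_eq gcoef_def)
    apply (unfold gG_def s0_def s1_def s2_def s3_def s4_def T31_def T211_def)
    by algebra
qed

lemma omega_key: "u \<noteq> 0 \<Longrightarrow> omega u * (1+u)^2 - (omega u + 4)*(1-u)^2 = 0"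
  unfolding omega_def by (simp add: field_simps power2_eq_square)

lemma hh_axis:
  "hh t w m a 0 0 = 2*(t-1)^4*(w*m^2-(w+4)*a^2)^2"
  "hh t w m 0 a 0 = 2*(t-1)^4*(w*m^2-(w+4)*a^2)^2"
  "hh t w m 0 0 a = 2*(t-1)^4*(w*m^2-(w+4)*a^2)^2"
  by (simp_all add: hh_def)

lemma hh_Z1:
  "hh t w (t+3) (t-1) (t-1) (t-1) = 0"
  "hh t w (t+3) (t-1) (-(t-1)) (-(t-1)) = 0"
  "hh t w (t+3) (-(t-1)) (t-1) (-(t-1)) = 0"
  "hh t w (t+3) (-(t-1)) (-(t-1)) (t-1) = 0"
  unfolding hh_def EPc_def GAc_def VF_def by algebra+

lemma PY_lin: "PY (\<lambda>i. k1 i - r * k2 i) m a b c = PY k1 m a b c - r * PY k2 m a b c"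
  by (simp add: PY_def algebra_simps)

lemma PYm_lin: "PYm (\<lambda>i. k1 i - r * k2 i) m a b c = PYm k1 m a b c - r * PYm k2 m a b c"
  by (simp add: PYm_def algebra_simps)
lemma PYa_lin: "PYa (\<lambda>i. k1 i - r * k2 i) m a b c = PYa k1 m a b c - r * PYa k2 m a b c"
  by (simp add: PYa_def algebra_simps)
lemma PYb_lin: "PYb (\<lambda>i. k1 i - r * k2 i) m a b c = PYb k1 m a b c - r * PYb k2 m a b c"
  by (simp add: PYb_def algebra_simps)
lemma PYc_lin: "PYc (\<lambda>i. k1 i - r * k2 i) m a b c = PYc k1 m a b c - r * PYc k2 m a b c"
  by (simp add: PYc_def algebra_simps)
lemma crit_lin: "crit k1 m a b c \<Longrightarrow> crit k2 m a b c \<Longrightarrow> crit (\<lambda>i. k1 i - r * k2 i) m a b c"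
  unfolding crit_def PYm_lin PYa_lin PYb_lin PYc_lin by simp

lemma PY_1000: "PY k 1 0 0 0 = k 0" by (simp add: PY_def)

theorem theorem2p5:
  fixes t u :: real
  assumes "t \<noteq> 0" "t \<noteq> 1"
    and "u \<noteq> 0" "u \<noteq> 1" "u \<noteq> -1"
    and "2*u \<noteq> t + 1" "t*u + u \<noteq> 2"
    and "DF t u \<noteq> 0"
    and "VF t (omega u) > 0"
  shows "extremal_P44 (gG t u)"
proof -
  have t1: "t - 1 \<noteq> 0" using assms(2) by simp
  have u0: "u \<noteq> 0" using assms(3) .
  define w where "w = omega u"
  have uw: "u * w = (u-1)^2" unfolding w_def omega_def using u0 by (simp add: field_simps power2_eq_square)
  have w0: "w \<noteq> 0"
  proof
    assume "w = 0"
    then have "(u-1)^2 = 0" using uw by simp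
    then show False using assms(4) by simp
  qed
  have vf: "VF t w \<ge> 0" using assms(9) unfolding w_def by simp
  have gpsd: "0 \<le> gG t u a b c d" for a b c d
  proof -
    have "gG t u a b c d = gG t u ((a+b+c+d)/4 + (a+b-c-d)/4 + (a-b+c-d)/4 + (a-b-c+d)/4)
       ((a+b+c+d)/4 + (a+b-c-d)/4 - (a-b+c-d)/4 - (a-b-c+d)/4)
       ((a+b+c+d)/4 - (a+b-c-d)/4 + (a-b+c-d)/4 - (a-b-c+d)/4)
       ((a+b+c+d)/4 - (a+b-c-d)/4 - (a-b+c-d)/4 + (a-b-c+d)/4)"
      by (rule Hinv) auto
    also have "\<dots> = u^2 * hh t w ((a+b+c+d)/4) ((a+b-c-d)/4) ((a-b+c-d)/4) ((a-b-c+d)/4)"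
      unfolding g_had w_def ..
    also have "\<dots> \<ge> 0" using hh_psd[OF vf] by simp
    finally show ?thesis .
  qed
  have gP: "gG t u \<in> P44" using g_qf gpsd by (simp add: P44_def)
  have g1: "gG t u 1 1 1 1 = u^2 * (2*(t-1)^4*w^2)"
    using g_had[of t u 1 0 0 0] unfolding w_def[symmetric] by (simp add: hh_def)
  have gpos: "gG t u 1 1 1 1 > 0" using g1 u0 w0 t1 by simp
  have gnz: "gG t u \<noteq> (\<lambda>a b c d. 0)"
  proof
    assume "gG t u = (\<lambda>a b c d. 0)"
    then have "gG t u 1 1 1 1 = 0" by simp
    then show False using gpos by simp
  qed
  have ext: "(\<exists>r\<ge>0. p = (\<lambda>a b c d. r * gG t u a b c d)) \<and> (\<exists>r\<ge>0. q = (\<lambda>a b c d. r * gG t u a b c d))"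
    if pP: "p \<in> P44" and qP: "q \<in> P44" and eq: "gG t u = (\<lambda>a b c d. p a b c d + q a b c d)" for p q
  proof -
    have gsum: "gG t u a b c d = p a b c d + q a b c d" for a b c d by (simp add: eq)
    have pnn: "0 \<le> p a b c d" for a b c d using pP by (simp add: P44_def)
    have qnn: "0 \<le> q a b c d" for a b c d using qP by (simp add: P44_def)
    have "quartic_form p" using pP by (simp add: P44_def)
    then obtain kp where kp: "\<forall>m a b c. p (m+a+b+c) (m+a-b-c) (m-a+b-c) (m-a-b+c) = PY kp m a b c"
      using transform by blast
    obtain kg where kg: "\<forall>m a b c. gG t u (m+a+b+c) (m+a-b-c) (m-a+b-c) (m-a-b+c) = PY kg m a b c"
      using transform g_qf by blast
    have Pnn: "0 \<le> PY kp m a b c" for m a b c using kp pnn by metis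
    have Gnn: "0 \<le> PY kg m a b c" for m a b c using kg gpsd by metis
    have ple: "PY kp m a b c \<le> PY kg m a b c" for m a b c
      using kp kg gsum qnn by (metis le_add_same_cancel1)
    have gH: "PY kg m a b c = u^2 * hh t w m a b c" for m a b c
      using kg g_had unfolding w_def by metis
    have zg: "crit kg m a b c \<and> crit kp m a b c" if h0: "hh t w m a b c = 0" for m a b c
    proof -
      have z1: "PY kg m a b c = 0" using gH h0 by simp
      have z2: "PY kp m a b c = 0" using ple[of m a b c] Pnn[of m a b c] z1 by simp
      show ?thesis using min_grad[OF Gnn z1] min_grad[OF Pnn z2] by blast
    qed
    define r where "r = kp 0 / kg 0"
    have kg0: "kg 0 = gG t u 1 1 1 1" using kg PY_1000[of kg] by (metis add_0_right diff_0_right)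
    have kp0: "kp 0 = p 1 1 1 1" using kp PY_1000[of kp] by (metis add_0_right diff_0_right)
    have kgpos: "kg 0 > 0" using kg0 gpos by simp
    define d where "d = (\<lambda>i. kp i - r * kg i)"
    have d0: "d 0 = 0" using kgpos by (simp add: d_def r_def)
    have cd: "crit d m a b c" if "hh t w m a b c = 0" for m a b c
      using zg[OF that] crit_lin unfolding d_def by blast
    have wk: "w * (1+u)^2 - (w + 4)*(1-u)^2 = 0" using omega_key[OF u0] unfolding w_def .
    have Z2: "hh t w (1+u) (1-u) 0 0 = 0" "hh t w (1+u) (-(1-u)) 0 0 = 0"
             "hh t w (1+u) 0 (1-u) 0 = 0" "hh t w (1+u) 0 (-(1-u)) 0 = 0"
             "hh t w (1+u) 0 0 (1-u) = 0" "hh t w (1+u) 0 0 (-(1-u)) = 0"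
      by (simp_all only: hh_axis power2_minus wk) simp_all
    have mu: "1 + u \<noteq> 0" using assms(5) by (auto simp: add_eq_0_iff)
    have nu: "1 - u \<noteq> 0" using assms(4) by simp
    have PYd: "PY d m a b c = 0" for m a b c
      by (rule linalg[OF mu nu t1 d0 cd[OF Z2(1)] cd[OF Z2(2)] cd[OF Z2(3)] cd[OF Z2(4)] cd[OF Z2(5)] cd[OF Z2(6)]
           cd[OF hh_Z1(1)] cd[OF hh_Z1(2)] cd[OF hh_Z1(3)] cd[OF hh_Z1(4)]])
    have pg: "p a b c d = r * gG t u a b c d" for a b c d
    proof -
      define m' a' b' c' where "m' = (a+b+c+d)/4" and "a' = (a+b-c-d)/4" and "b' = (a-b+c-d)/4" and "c' = (a-b-c+d)/4"
      have "p a b c d = p (m'+a'+b'+c') (m'+a'-b'-c') (m'-a'+b'-c') (m'-a'-b'+c')"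
        by (rule Hinv) (simp_all add: m'_def a'_def b'_def c'_def)
      also have "\<dots> = PY kp m' a' b' c'" using kp by simp
      also have "\<dots> = r * PY kg m' a' b' c'" using PYd[of m' a' b' c'] PY_lin[of kp r kg m' a' b' c'] unfolding d_def by simp
      also have "PY kg m' a' b' c' = gG t u (m'+a'+b'+c') (m'+a'-b'-c') (m'-a'+b'-c') (m'-a'-b'+c')" using kg by simp
      also have "\<dots> = gG t u a b c d"
        by (rule Hinv[symmetric]) (simp_all add: m'_def a'_def b'_def c'_def)
      finally show ?thesis .
    qed
    have r0: "r \<ge> 0" unfolding r_def using kp0 kg0 pnn kgpos by simp
    have qg: "q a b c d = (1 - r) * gG t u a b c d" for a b c d
      using gsum[of a b c d] pg[of a b c d] by (simp add: algebra_simps)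
    have "0 \<le> (1 - r) * gG t u 1 1 1 1" using qg[of 1 1 1 1] qnn[of 1 1 1 1] by simp
    then have r1: "1 - r \<ge> 0" using gpos by (simp add: zero_le_mult_iff)
    show ?thesis
    proof
      show "\<exists>r\<ge>0. p = (\<lambda>a b c d. r * gG t u a b c d)" using r0 by (intro exI[of _ r]) (auto intro!: ext simp: pg)
      show "\<exists>r\<ge>0. q = (\<lambda>a b c d. r * gG t u a b c d)" using r1 by (intro exI[of _ "1 - r"]) (auto intro!: ext simp: qg)
    qed
  qed
  show ?thesis unfolding extremal_P44_def using gP gnz ext by blast
qed


end
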